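(* Fix an equation $(f,q,w)$ as in the context with $\prod_{i=0}^{N-1}(1/f_i)>0$. Let $\gamma\in(-\pi,0)\cup(0,\pi)$ and $K=(k_{ij})\in SL(2,\mathbb R)$ with $k_{11}-f_0k_{12}\neq0$. Let $\mathbf U_K=\begin{pmatrix}k_{11}&k_{12}&0&0\\0&0&1&0\end{pmatrix}$. For $M\in\{K,-K\}$ with entries $m_{ij}$, write $\lambda_j(M)$, $\lambda_j(-M)$, $\lambda_j(e^{i\gamma}M)$, $\lambda_j(\mathbf U_K)$ for the eigenvalues with boundary conditions $[M|-I]$, $[-M|-I]$, $[e^{i\gamma}M|-I]$, $\mathbf U_K$, and put $m_j=\min\{\lambda_j(M),\lambda_j(-M)\}$, $M_j=\max\{\lambda_j(M),\lambda_j(-M)\}$. If $m_{11}-f_0m_{12}>0$, then for every $0\le j\le N-1$: $\lambda_j(M)<\lambda_j(e^{i\gamma}M)<\lambda_j(-M)$ if $j$ is even and $\lambda_j(-M)<\lambda_j(e^{i\gamma}M)<\lambda_j(M)$ if $j$ is odd; and $M_j\le\lambda_j(\mathbf U_K)\le m_{j+1}$ for $0\le j\le N-2$.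
   Context: Let $N\ge2$ be an integer. An equation is given by real sequences $f=\{f_n\}_{n=0}^N$, $q=\{q_n\}_{n=1}^N$, $w=\{w_n\}_{n=1}^N$ with $f_n\neq0$, $w_n>0$; it is $-\nabla(f_n\Delta y_n)+q_ny_n=\lambda w_ny_n$, $1\le n\le N$, for $y=\{y_n\}_{n=0}^{N+1}$, $\Delta y_n=y_{n+1}-y_n$, $\nabla y_n=y_n-y_{n-1}$. A boundary condition $[A\,|\,B]$ (equivalently the $2\times4$ coefficient matrix $(A,B)$ of rank 2) is $A(y_0,f_0\Delta y_0)^T+B(y_N,f_N\Delta y_N)^T=0$; matrices differing by left multiplication by an invertible $2\times2$ complex matrix give the same condition (so $\mathbf U_{-K}=\mathbf U_K$). $SL(2,\mathbb R)$: real $2\times2$ matrices of determinant 1; $I$ the identity. Eigenvalues ($\lambda$ with a nontrivial solution) are real; multiplicity = dimension of the solution space; counted with multiplicity they are ordered $\lambda_0\le\lambda_1\le\cdots$. *)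

theory Defs
  imports "HOL-Analysis.Analysis" "HOL-Library.Function_Algebras" "HOL-Library.Multiset"
begin

definition vec2 :: "'a \<Rightarrow> 'a \<Rightarrow> 'a ^ 2" where
  "vec2 a b = (\<chi> i. if i = 1 then a else b)"

definition mat2 :: "'a \<Rightarrow> 'a \<Rightarrow> 'a \<Rightarrow> 'a \<Rightarrow> 'a ^ 2 ^ 2" where
  "mat2 a b c d = (\<chi> i j. if i = 1 then (if j = 1 then a else b) else (if j = 1 then c else d))"

text \<open>A boundary condition [A|B] is a pair of complex 2x2 matrices (the 2x4 matrix (A,B)).
  It reads  A (y_0, f_0 \<Delta>y_0)^T + B (y_N, f_N \<Delta>y_N)^T = 0.\<close>
type_synonym bc = "(complex ^ 2 ^ 2) \<times> (complex ^ 2 ^ 2)"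

definition bc_holds :: "(nat \<Rightarrow> real) \<Rightarrow> nat \<Rightarrow> bc \<Rightarrow> (nat \<Rightarrow> complex) \<Rightarrow> bool" where
  "bc_holds f N AB y \<longleftrightarrow>
     fst AB *v vec2 (y 0) (of_real (f 0) * (y 1 - y 0))
   + snd AB *v vec2 (y N) (of_real (f N) * (y (N+1) - y N)) = 0"

definition sl_eq :: "(nat \<Rightarrow> real) \<Rightarrow> (nat \<Rightarrow> real) \<Rightarrow> (nat \<Rightarrow> real) \<Rightarrow> nat \<Rightarrow> real \<Rightarrow> (nat \<Rightarrow> complex) \<Rightarrow> bool" where
  "sl_eq f q w N lam y \<longleftrightarrow>
     (\<forall>n\<in>{1..N}. - (of_real (f n) * (y (n+1) - y n) - of_real (f (n-1)) * (y n - y (n-1)))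
                  + of_real (q n) * y n = of_real (lam * w n) * y n)"

definition sol_space :: "(nat \<Rightarrow> real) \<Rightarrow> (nat \<Rightarrow> real) \<Rightarrow> (nat \<Rightarrow> real) \<Rightarrow> nat \<Rightarrow> bc \<Rightarrow> real \<Rightarrow> (nat \<Rightarrow> complex) set" where
  "sol_space f q w N AB lam =
     {y. (\<forall>n > N + 1. y n = 0) \<and> sl_eq f q w N lam y \<and> bc_holds f N AB y}"

definition cscale :: "complex \<Rightarrow> (nat \<Rightarrow> complex) \<Rightarrow> (nat \<Rightarrow> complex)" where
  "cscale c y = (\<lambda>n. c * y n)"

definition multiplicity :: "(nat \<Rightarrow> real) \<Rightarrow> (nat \<Rightarrow> real) \<Rightarrow> (nat \<Rightarrow> real) \<Rightarrow> nat \<Rightarrow> bc \<Rightarrow> real \<Rightarrow> nat" where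
  "multiplicity f q w N AB lam = vector_space.dim cscale (sol_space f q w N AB lam)"

definition is_eigenvalue :: "(nat \<Rightarrow> real) \<Rightarrow> (nat \<Rightarrow> real) \<Rightarrow> (nat \<Rightarrow> real) \<Rightarrow> nat \<Rightarrow> bc \<Rightarrow> real \<Rightarrow> bool" where
  "is_eigenvalue f q w N AB lam \<longleftrightarrow> (\<exists>y\<in>sol_space f q w N AB lam. y \<noteq> 0)"

definition eig_mset :: "(nat \<Rightarrow> real) \<Rightarrow> (nat \<Rightarrow> real) \<Rightarrow> (nat \<Rightarrow> real) \<Rightarrow> nat \<Rightarrow> bc \<Rightarrow> real multiset" where
  "eig_mset f q w N AB =
     (\<Sum>\<mu>\<in>{\<mu>. is_eigenvalue f q w N AB \<mu>}. replicate_mset (multiplicity f q w N AB \<mu>) \<mu>)"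

definition eig :: "(nat \<Rightarrow> real) \<Rightarrow> (nat \<Rightarrow> real) \<Rightarrow> (nat \<Rightarrow> real) \<Rightarrow> nat \<Rightarrow> bc \<Rightarrow> nat \<Rightarrow> real" where
  "eig f q w N AB j = sorted_list_of_multiset (eig_mset f q w N AB) ! j"

definition coupled_bc :: "complex ^ 2 ^ 2 \<Rightarrow> bc" where
  "coupled_bc M = (M, - mat 1)"

definition cmat :: "complex \<Rightarrow> real ^ 2 ^ 2 \<Rightarrow> complex ^ 2 ^ 2" where
  "cmat c M = (\<chi> i j. c * of_real (M $ i $ j))"

definition U_bc :: "real ^ 2 ^ 2 \<Rightarrow> bc" where
  "U_bc K = (mat2 (of_real (K$1$1)) (of_real (K$1$2)) 0 0, mat2 0 0 1 0)"

end

theory Submission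
  imports Defs "HOL-Computational_Algebra.Fundamental_Theorem_Algebra"
begin

locale slp =
  fixes f q w :: "nat \<Rightarrow> real"
begin

definition av :: "nat \<Rightarrow> real poly" where "av n = [:q n, - w n:]"
definition fi :: "nat \<Rightarrow> real poly" where "fi n = [:1 / f n:]"

fun pA :: "nat \<Rightarrow> real poly" and pC :: "nat \<Rightarrow> real poly" where
  "pA 0 = 1"
| "pC 0 = 0"
| "pA (Suc n) = pA n + fi n * pC n"
| "pC (Suc n) = pC n + av (Suc n) * (pA n + fi n * pC n)"

fun pB :: "nat \<Rightarrow> real poly" and pD :: "nat \<Rightarrow> real poly" where
  "pB 0 = 0"
| "pD 0 = 1"
| "pB (Suc n) = pB n + fi n * pD n"
| "pD (Suc n) = pD n + av (Suc n) * (pB n + fi n * pD n)"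

lemma pC_Suc': "pC (Suc n) = pC n + av (Suc n) * pA (Suc n)" by simp
lemma pD_Suc': "pD (Suc n) = pD n + av (Suc n) * pB (Suc n)" by simp

declare pA.simps(2)[simp del] pB.simps(2)[simp del] pC.simps(2)[simp del] pD.simps(2)[simp del]

lemma det_one: "pA n * pD n - pB n * pC n = 1"
proof (induction n)
  case 0 then show ?case by simp
next
  case (Suc n)
  show ?case
    unfolding pC_Suc' pD_Suc' pA.simps(2) pB.simps(2) using Suc
    by algebra
qed


definition g11 :: "nat \<Rightarrow> real poly" where "g11 n = (\<Sum>k\<in>{1..n}. [:w k:] * pA k * pA k)"
definition g12 :: "nat \<Rightarrow> real poly" where "g12 n = (\<Sum>k\<in>{1..n}. [:w k:] * pA k * pB k)"
definition g22 :: "nat \<Rightarrow> real poly" where "g22 n = (\<Sum>k\<in>{1..n}. [:w k:] * pB k * pB k)"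

lemma g_Suc:
  "g11 (Suc n) = g11 n + [:w (Suc n):] * pA (Suc n) * pA (Suc n)"
  "g12 (Suc n) = g12 n + [:w (Suc n):] * pA (Suc n) * pB (Suc n)"
  "g22 (Suc n) = g22 n + [:w (Suc n):] * pB (Suc n) * pB (Suc n)"
  by (simp_all add: g11_def g12_def g22_def)

lemma pderiv_av: "pderiv (av n) = - [:w n:]"
  by (simp add: av_def pderiv_pCons)
lemma pderiv_fi: "pderiv (fi n) = 0"
  by (simp add: fi_def)

lemma pderiv_all:
  "pderiv (pA n) = pA n * g12 n - pB n * g11 n \<and>
   pderiv (pB n) = pA n * g22 n - pB n * g12 n \<and>
   pderiv (pC n) = pC n * g12 n - pD n * g11 n \<and>
   pderiv (pD n) = pC n * g22 n - pD n * g12 n"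
proof (induction n)
  case 0 then show ?case by (simp add: g11_def g12_def g22_def)
next
  case (Suc n)
  have IH: "pderiv (pA n) = pA n * g12 n - pB n * g11 n"
   "pderiv (pB n) = pA n * g22 n - pB n * g12 n"
   "pderiv (pC n) = pC n * g12 n - pD n * g11 n"
   "pderiv (pD n) = pC n * g22 n - pD n * g12 n" using Suc by auto
  have d: "pA (Suc n) * pD (Suc n) - pB (Suc n) * pC (Suc n) = 1" by (rule det_one)
  have eA: "pderiv (pA (Suc n)) = pA (Suc n) * g12 (Suc n) - pB (Suc n) * g11 (Suc n)"
    unfolding g_Suc pA.simps(2) pB.simps(2)
    by (simp only: pderiv_add pderiv_mult pderiv_fi IH) algebra
  have eB: "pderiv (pB (Suc n)) = pA (Suc n) * g22 (Suc n) - pB (Suc n) * g12 (Suc n)"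
    unfolding g_Suc pA.simps(2) pB.simps(2)
    by (simp only: pderiv_add pderiv_mult pderiv_fi IH) algebra
  have eC: "pderiv (pC (Suc n)) = pC (Suc n) * g12 (Suc n) - pD (Suc n) * g11 (Suc n)"
  proof -
    have "pderiv (pC (Suc n)) = pderiv (pC n) + av (Suc n) * pderiv (pA (Suc n)) - [:w (Suc n):] * pA (Suc n)"
      unfolding pC_Suc' by (simp add: pderiv_add pderiv_mult pderiv_av)
    also have "\<dots> = pC n * g12 n - pD n * g11 n + av (Suc n) * (pA (Suc n) * g12 n - pB (Suc n) * g11 n)
        - [:w (Suc n):] * pA (Suc n)"
      unfolding IH pA.simps(2) pB.simps(2)
      by (simp only: pderiv_add pderiv_mult pderiv_fi IH) algebra
    also have "\<dots> = pC (Suc n) * g12 (Suc n) - pD (Suc n) * g11 (Suc n)"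
      using d unfolding g_Suc pC_Suc' pD_Suc' by algebra
    finally show ?thesis .
  qed
  have eD: "pderiv (pD (Suc n)) = pC (Suc n) * g22 (Suc n) - pD (Suc n) * g12 (Suc n)"
  proof -
    have "pderiv (pD (Suc n)) = pderiv (pD n) + av (Suc n) * pderiv (pB (Suc n)) - [:w (Suc n):] * pB (Suc n)"
      unfolding pD_Suc' by (simp add: pderiv_add pderiv_mult pderiv_av)
    also have "\<dots> = pC n * g22 n - pD n * g12 n + av (Suc n) * (pA (Suc n) * g22 n - pB (Suc n) * g12 n)
        - [:w (Suc n):] * pB (Suc n)"
      unfolding IH pA.simps(2) pB.simps(2)
      by (simp only: pderiv_add pderiv_mult pderiv_fi IH) algebra
    also have "\<dots> = pC (Suc n) * g22 (Suc n) - pD (Suc n) * g12 (Suc n)"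
      using d unfolding g_Suc pC_Suc' pD_Suc' by algebra
    finally show ?thesis .
  qed
  show ?case using eA eB eC eD by blast
qed


lemma fi_mult: "fi n * p = smult (1 / f n) p" by (simp add: fi_def)
lemma av_mult: "av n * p = smult (q n) p + pCons 0 (smult (- w n) p)" by (simp add: av_def)

definition WW :: "nat \<Rightarrow> real" where "WW n = (\<Prod>k\<in>{1..n}. w k)"
definition FF :: "nat \<Rightarrow> real" where "FF n = (\<Prod>k<n. f k)"

lemma WW_Suc: "WW (Suc n) = WW n * w (Suc n)" by (simp add: WW_def prod.cl_ivl_Suc)
lemma FF_Suc: "FF (Suc n) = FF n * f n" by (simp add: FF_def)

lemma deg_coeff:
  assumes "\<forall>k\<le>m. f k \<noteq> 0"
  shows "degree (pA (Suc m)) \<le> m \<and> coeff (pA (Suc m)) m = (-1)^m * WW m * f 0 / FF (Suc m) \<and>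
         degree (pB (Suc m)) \<le> m \<and> coeff (pB (Suc m)) m = (-1)^m * WW m / FF (Suc m) \<and>
         degree (pC (Suc m)) \<le> Suc m \<and> coeff (pC (Suc m)) (Suc m) = (-1)^(Suc m) * WW (Suc m) * f 0 / FF (Suc m) \<and>
         degree (pD (Suc m)) \<le> Suc m \<and> coeff (pD (Suc m)) (Suc m) = (-1)^(Suc m) * WW (Suc m) / FF (Suc m)"
  using assms
proof (induction m)
  case 0
  have f0: "f 0 \<noteq> 0" using 0 by auto
  have A1: "pA 1 = 1" by (simp add: pA.simps)
  have B1: "pB 1 = [:1 / f 0:]" by (simp add: pB.simps fi_def)
  have C1: "pC 1 = [:q 1, - w 1:]" by (simp add: pC.simps pA.simps av_def)
  have D1: "pD 1 = [:1 + q 1 / f 0, - w 1 / f 0:]" by (simp add: pD.simps pB.simps av_def fi_def one_pCons)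
  show ?case using f0 A1 B1 C1 D1 by (simp add: WW_def FF_def)
next
  case (Suc m)
  have fm: "\<forall>k\<le>m. f k \<noteq> 0" "f (Suc m) \<noteq> 0" using Suc.prems by auto
  note IH = Suc.IH[OF fm(1)]
  have FFnz: "FF (Suc m) \<noteq> 0" using fm(1) by (simp add: FF_def)
  have dA: "degree (pA (Suc (Suc m))) \<le> Suc m" 
    unfolding pA.simps(2)[of "Suc m"] fi_mult
    using IH by (intro degree_add_le) (auto simp: degree_smult_le intro: order.trans[OF degree_smult_le])
  have cA: "coeff (pA (Suc (Suc m))) (Suc m) = coeff (pC (Suc m)) (Suc m) / f (Suc m)"
    unfolding pA.simps(2)[of "Suc m"] fi_mult using IH
    by (simp add: coeff_eq_0)
  have dB: "degree (pB (Suc (Suc m))) \<le> Suc m" 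
    unfolding pB.simps(2)[of "Suc m"] fi_mult
    using IH by (intro degree_add_le) (auto simp: degree_smult_le intro: order.trans[OF degree_smult_le])
  have cB: "coeff (pB (Suc (Suc m))) (Suc m) = coeff (pD (Suc m)) (Suc m) / f (Suc m)"
    unfolding pB.simps(2)[of "Suc m"] fi_mult using IH
    by (simp add: coeff_eq_0)
  have dC: "degree (pC (Suc (Suc m))) \<le> Suc (Suc m)"
    unfolding pC_Suc'[of "Suc m"] av_mult using IH dA
    by (intro degree_add_le) (auto intro!: degree_add_le order.trans[OF degree_smult_le] simp: degree_pCons_le)
  have cC: "coeff (pC (Suc (Suc m))) (Suc (Suc m)) = - w (Suc (Suc m)) * coeff (pA (Suc (Suc m))) (Suc m)"
    unfolding pC_Suc'[of "Suc m"] av_mult using IH dA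
    by (simp add: coeff_eq_0)
  have dD: "degree (pD (Suc (Suc m))) \<le> Suc (Suc m)"
    unfolding pD_Suc'[of "Suc m"] av_mult using IH dB
    by (intro degree_add_le) (auto intro!: degree_add_le order.trans[OF degree_smult_le] simp: degree_pCons_le)
  have cD: "coeff (pD (Suc (Suc m))) (Suc (Suc m)) = - w (Suc (Suc m)) * coeff (pB (Suc (Suc m))) (Suc m)"
    unfolding pD_Suc'[of "Suc m"] av_mult using IH dB
    by (simp add: coeff_eq_0)
  show ?case using dA dB dC dD cA cB cC cD IH fm FFnz
    by (simp add: WW_Suc FF_Suc field_simps)
qed

end

locale bandT =
  fixes S :: "real poly" and N :: nat
  assumes N2: "N \<ge> 2"
    and degS: "degree S = N"
    and nroots: "card {x. poly S x = 0} = N"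
    and H2: "\<And>x. \<bar>poly S x\<bar> < 2 \<Longrightarrow> poly (pderiv S) x \<noteq> 0"
    and lft: "\<exists>X. \<forall>x\<le>X. poly S x > 2"
    and rgt: "\<exists>Y. \<forall>x\<ge>Y. (-1)^N * poly S x > 2"
begin

abbreviation D where "D x \<equiv> poly (pderiv S) x"

lemma S_nz: "S \<noteq> 0" using degS N2 by auto

lemma fin_roots: "finite {x. poly S x = 0}" using poly_roots_finite[OF S_nz] .

definition zs :: "real list" where "zs = sorted_list_of_set {x. poly S x = 0}"

lemma zs: "sorted_wrt (<) zs" "set zs = {x. poly S x = 0}" "length zs = N"
  using fin_roots nroots by (auto simp: zs_def)

definition z :: "nat \<Rightarrow> real" where "z j = zs ! j"

lemma z_less: "i < j \<Longrightarrow> j < N \<Longrightarrow> z i < z j"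
  unfolding z_def using sorted_wrt_nth_less[OF zs(1), of i j] zs(3) by simp

lemma z_le: "i \<le> j \<Longrightarrow> j < N \<Longrightarrow> z i \<le> z j"
  using z_less[of i j] by (cases "i = j") auto

lemma z_root: "j < N \<Longrightarrow> poly S (z j) = 0"
proof -
  assume "j < N"
  then have "zs ! j \<in> set zs" using zs(3) by simp
  then show ?thesis using zs(2) unfolding z_def by blast
qed

lemma root_z: "poly S x = 0 \<Longrightarrow> \<exists>j<N. x = z j"
proof -
  assume "poly S x = 0"
  then have "x \<in> set zs" using zs(2) by blast
  then obtain j where "j < length zs" "zs ! j = x" by (auto simp: in_set_conv_nth)
  then show ?thesis using zs(3) unfolding z_def by metis
qed

definition zeta :: "nat \<Rightarrow> real" where
  "zeta j = (SOME x. z j < x \<and> x < z (Suc j) \<and> D x = 0)"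

lemma zeta: assumes "Suc j < N" shows "z j < zeta j" "zeta j < z (Suc j)" "D (zeta j) = 0"
proof -
  have lt: "z j < z (Suc j)" using z_less assms by auto
  obtain x where "z j < x" "x < z (Suc j)" "poly S (z (Suc j)) - poly S (z j) = (z (Suc j) - z j) * D x"
    using poly_MVT[OF lt] by blast
  moreover have "poly S (z (Suc j)) = 0" "poly S (z j) = 0" using z_root assms by auto
  ultimately have ex: "\<exists>x. z j < x \<and> x < z (Suc j) \<and> D x = 0" using lt by auto
  show "z j < zeta j" "zeta j < z (Suc j)" "D (zeta j) = 0"
    using someI_ex[OF ex] unfolding zeta_def by auto
qed

lemma zeta_less: assumes "i < j" "Suc j < N" shows "zeta i < zeta j"
proof -
  have "zeta i < z (Suc i)" using zeta(2)[of i] assms by auto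
  also have "z (Suc i) \<le> z j" using z_le assms by auto
  also have "z j < zeta j" using zeta(1) assms by auto
  finally show ?thesis .
qed

lemma zeta_le: "i \<le> j \<Longrightarrow> Suc j < N \<Longrightarrow> zeta i \<le> zeta j"
  using zeta_less[of i j] by (cases "i = j") auto

lemma zeta_inj: "Suc i < N \<Longrightarrow> Suc j < N \<Longrightarrow> zeta i = zeta j \<Longrightarrow> i = j"
  using zeta_less by (metis less_irrefl nat_neq_iff)

lemma dS_root: assumes "D x = 0" shows "\<exists>j. Suc j < N \<and> x = zeta j"
proof (rule ccontr)
  assume nx: "\<not> ?thesis"
  have dd: "degree (pderiv S) = N - 1" using degS by (simp add: degree_pderiv)
  have dnz: "pderiv S \<noteq> 0" using dd N2 by (auto simp: pderiv_eq_0_iff degS)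
  have fin: "finite {x. D x = 0}" using poly_roots_finite[OF dnz] .
  have sub: "insert x (zeta ` {..<N-1}) \<subseteq> {x. D x = 0}"
    using assms zeta(3) by auto
  have "card (insert x (zeta ` {..<N-1})) = Suc (N - 1)"
  proof -
    have inj: "inj_on zeta {..<N-1}" using zeta_inj by (intro inj_onI) auto
    have "x \<notin> zeta ` {..<N-1}"
    proof
      assume "x \<in> zeta ` {..<N-1}"
      then obtain i where "i < N - 1" "x = zeta i" by auto
      moreover then have "Suc i < N" by arith
      ultimately show False using nx by blast
    qed
    then show ?thesis using card_image[OF inj] by simp
  qed
  moreover have "card (insert x (zeta ` {..<N-1})) \<le> card {x. D x = 0}"
    using card_mono[OF fin sub] .
  moreover have "card {x. D x = 0} \<le> N - 1"
    using card_poly_roots_bound[OF dnz] dd by simp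
  ultimately show False by simp
qed

definition inP :: "nat \<Rightarrow> real \<Rightarrow> bool" where
  "inP j x \<longleftrightarrow> (j = 0 \<or> zeta (j - 1) \<le> x) \<and> (Suc j = N \<or> x \<le> zeta j)"
definition intP :: "nat \<Rightarrow> real \<Rightarrow> bool" where
  "intP j x \<longleftrightarrow> (j = 0 \<or> zeta (j - 1) < x) \<and> (Suc j = N \<or> x < zeta j)"

lemma intP_inP: "intP j x \<Longrightarrow> inP j x" by (auto simp: intP_def inP_def)

lemma inP_conv: "inP j a \<Longrightarrow> inP j b \<Longrightarrow> a \<le> x \<Longrightarrow> x \<le> b \<Longrightarrow> inP j x"
  by (auto simp: inP_def)

lemma inP_int: "inP j a \<Longrightarrow> inP j b \<Longrightarrow> a < x \<Longrightarrow> x < b \<Longrightarrow> intP j x"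
  by (auto simp: inP_def intP_def)

lemma intP_D: assumes "j < N" "intP j x" shows "D x \<noteq> 0"
proof
  assume "D x = 0"
  then obtain i where i: "Suc i < N" "x = zeta i" using dS_root by blast
  show False
  proof (cases "i < j")
    case True
    then have "j \<noteq> 0" "zeta i \<le> zeta (j - 1)" using zeta_le[of i "j-1"] assms by auto
    then show False using assms(2) i by (auto simp: intP_def)
  next
    case False
    then have "Suc j \<noteq> N" "zeta j \<le> zeta i" using zeta_le[of j i] i by auto
    then show False using assms(2) i by (auto simp: intP_def)
  qed
qed

lemma z_intP: assumes "j < N" shows "intP j (z j)"
proof -
  have "j \<noteq> 0 \<Longrightarrow> zeta (j - 1) < z j" using zeta(2)[of "j-1"] assms by auto
  moreover have "Suc j \<noteq> N \<Longrightarrow> z j < zeta j" using zeta(1)[of j] assms by auto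
  ultimately show ?thesis by (auto simp: intP_def)
qed

lemma D_sign_const: assumes "j < N" "intP j x" "intP j y" shows "D x * D y > 0"
proof -
  have nx: "D x \<noteq> 0" and ny: "D y \<noteq> 0" using intP_D assms by auto
  { fix a b assume ab: "a < b" "intP j a" "intP j b" "D a * D b < 0"
    then obtain t where t: "a < t" "t < b" "D t = 0" using poly_IVT[of a b "pderiv S"] by auto
    have "intP j t" using ab t by (auto simp: intP_def)
    then have False using intP_D assms(1) t by auto }
  note * = this
  show ?thesis
  proof (cases x y rule: linorder_cases)
    case less then show ?thesis using *[of x y] assms nx ny
      by (metis linorder_neqE_linordered_idom mult_eq_0_iff)
  next
    case equal then show ?thesis using nx by (auto simp: zero_less_mult_iff linorder_neq_iff)
  next
    case greater then show ?thesis using *[of y x] assms nx ny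
      by (metis linorder_neqE_linordered_idom mult.commute mult_eq_0_iff)
  qed
qed

lemma MVT_piece: assumes "j < N" "inP j x" "inP j y" "x < y"
  shows "\<exists>t. intP j t \<and> poly S y - poly S x = (y - x) * D t"
proof -
  obtain t where "x < t" "t < y" "poly S y - poly S x = (y - x) * D t" using poly_MVT[OF assms(4)] by blast
  then show ?thesis using inP_int[OF assms(2,3)] by blast
qed

lemma m1sq: "((-1::real)^n) * (-1)^n = 1" by (induction n) auto

lemma sign_helper: fixes s a b :: real assumes "s * s = 1" "s * b < 0" "a * b > 0" shows "s * a < 0"
proof -
  have e: "(s * a) * (s * b) = (s * s) * (a * b)" by (simp add: algebra_simps)
  have "(s * a) * (s * b) > 0" unfolding e assms(1) using assms(3) by simp
  moreover have "\<And>x y::real. 0 < x * y \<Longrightarrow> y < 0 \<Longrightarrow> x < 0"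
    by (auto simp: zero_less_mult_iff)
  ultimately show ?thesis using assms(2) by blast
qed

lemma dec_all: "j < N \<Longrightarrow> intP j x \<Longrightarrow> (-1)^j * D x < 0"
proof (induction j arbitrary: x)
  case 0
  obtain X where X: "\<forall>x\<le>X. poly S x > 2" using lft by blast
  define a where "a = min X (z 0 - 1)"
  have "a < z 0" by (simp add: a_def)
  have ia: "inP 0 a" using \<open>a < z 0\<close> zeta(1)[of 0] N2 by (auto simp: inP_def)
  have iz: "inP 0 (z 0)" using z_intP[of 0] N2 intP_inP by auto
  obtain t where t: "intP 0 t" "poly S (z 0) - poly S a = (z 0 - a) * D t"
    using MVT_piece[OF _ ia iz \<open>a < z 0\<close>] N2 by auto
  have "poly S a > 2" using X by (simp add: a_def)
  then have "(z 0 - a) * D t < 0" using t(2) z_root[of 0] N2 by simp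
  then have "D t < 0" using \<open>a < z 0\<close> by (simp add: mult_less_0_iff)
  moreover have "D x * D t > 0" using D_sign_const[of 0 x t] 0 t(1) by auto
  ultimately show ?case by (simp add: zero_less_mult_iff)
next
  case (Suc j)
  have jN: "Suc j < N" using Suc.prems by simp
  have izj: "inP j (z j)" using z_intP[of j] jN intP_inP by auto
  have izeta: "inP j (zeta j)" using jN zeta_le[of "j-1" j] by (auto simp: inP_def)
  obtain t where t: "intP j t" "poly S (zeta j) - poly S (z j) = (zeta j - z j) * D t"
    using MVT_piece[OF _ izj izeta zeta(1)[OF jN]] jN by auto
  have "(-1)^j * D t < 0" using Suc.IH[of t] t(1) jN by auto
  have e: "poly S (zeta j) = (zeta j - z j) * D t" using t(2) z_root[of j] jN by simp
  have eq: "(-1)^j * poly S (zeta j) = (zeta j - z j) * ((-1)^j * D t)"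
    unfolding e by (simp add: algebra_simps)
  have neg: "(zeta j - z j) * ((-1)^j * D t) < 0"
    by (rule mult_pos_neg) (use zeta(1)[OF jN] \<open>(-1)^j * D t < 0\<close> in auto)
  have s1: "(-1)^j * poly S (zeta j) < 0" using eq neg by linarith
  have izeta': "inP (Suc j) (zeta j)" unfolding inP_def
    using jN zeta_le[of j "Suc j"] by (cases "Suc (Suc j) < N") auto
  have iz': "inP (Suc j) (z (Suc j))" using z_intP[OF jN] intP_inP by auto
  obtain t' where t': "intP (Suc j) t'" "poly S (z (Suc j)) - poly S (zeta j) = (z (Suc j) - zeta j) * D t'"
    using MVT_piece[OF jN izeta' iz' zeta(2)[OF jN]] by auto
  have e': "poly S (zeta j) = - ((z (Suc j) - zeta j) * D t')" using t'(2) z_root[OF jN] by simp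
  have "(-1)^j * poly S (zeta j) = (z (Suc j) - zeta j) * ((-1)^(Suc j) * D t')"
    unfolding e' by (simp add: algebra_simps)
  then have "(z (Suc j) - zeta j) * ((-1)^(Suc j) * D t') < 0" using s1 by simp
  then have "(-1)^(Suc j) * D t' < 0"
    using zeta(2)[OF jN] by (simp add: mult_less_0_iff zero_less_mult_iff)
  moreover have "D x * D t' > 0" using D_sign_const[OF jN Suc.prems(2) t'(1)] .
  ultimately show ?case by (rule sign_helper[OF m1sq])
qed


lemma m1pow: "((-1::real)^j) = (if even j then 1 else -1)" by simp

lemma Smono: assumes "j < N" "inP j x" "inP j y" "x < y"
  shows "(-1)^j * poly S y < (-1)^j * poly S x"
proof -
  obtain t where t: "intP j t" "poly S y - poly S x = (y - x) * D t" using MVT_piece[OF assms] by blast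
  have "(-1)^j * D t < 0" using dec_all[OF assms(1) t(1)] .
  then have "(y - x) * ((-1)^j * D t) < 0" by (rule mult_pos_neg[rotated]) (use assms(4) in auto)
  moreover have "(-1)^j * poly S y - (-1)^j * poly S x = (-1)^j * (poly S y - poly S x)"
    by (simp add: right_diff_distrib)
  moreover have "(-1)^j * (poly S y - poly S x) = (y - x) * ((-1)^j * D t)"
    unfolding t(2) by (simp only: mult_ac)
  ultimately show ?thesis by linarith
qed

lemma inj_piece: assumes "j < N" "inP j x" "inP j y" "poly S x = poly S y" shows "x = y"
  using Smono[OF assms(1,2,3)] Smono[OF assms(1,3,2)] assms(4) by (cases x y rule: linorder_cases) auto

lemma abs_m1: "\<bar>(-1::real)^j * a\<bar> = \<bar>a\<bar>" by (simp add: abs_mult)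

lemma zeta_val: assumes "Suc j < N" shows "(-1)^j * poly S (zeta j) \<le> -2"
proof -
  have izj: "inP j (z j)" using z_intP[of j] assms intP_inP by auto
  have izeta: "inP j (zeta j)" using assms zeta_le[of "j-1" j] by (auto simp: inP_def)
  have "(-1)^j * poly S (zeta j) < (-1)^j * poly S (z j)" using Smono[OF _ izj izeta zeta(1)[OF assms]] assms by auto
  then have neg: "(-1)^j * poly S (zeta j) < 0" using z_root[of j] assms by simp
  have "\<not> \<bar>poly S (zeta j)\<bar> < 2" using H2 zeta(3)[OF assms] by blast
  then have "\<bar>(-1)^j * poly S (zeta j)\<bar> \<ge> 2" unfolding abs_m1 by simp
  then show ?thesis using neg by linarith
qed

lemma inP_ex: "\<exists>j<N. inP j x"
proof (cases "\<exists>i. Suc i < N \<and> x \<le> zeta i")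
  case True
  define j where "j = (LEAST i. Suc i < N \<and> x \<le> zeta i)"
  have j: "Suc j < N" "x \<le> zeta j" using LeastI_ex[OF True] unfolding j_def by auto
  have "j = 0 \<or> zeta (j - 1) \<le> x"
  proof (cases j)
    case (Suc k)
    have "\<not> (Suc k < N \<and> x \<le> zeta k)" using not_less_Least[of k "\<lambda>i. Suc i < N \<and> x \<le> zeta i"] Suc unfolding j_def by auto
    then show ?thesis using Suc j by auto
  qed simp
  then show ?thesis using j by (intro exI[of _ j]) (auto simp: inP_def)
next
  case False
  have "N - 1 = 0 \<or> zeta (N - 1 - 1) \<le> x"
  proof (cases "N - 1")
    case (Suc k) then have "Suc k < N" by arith
    then show ?thesis using False Suc by auto
  qed simp
  then show ?thesis using N2 by (intro exI[of _ "N-1"]) (auto simp: inP_def)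
qed

lemma inP_order: assumes "i < j" "j < N" "inP i x" "inP j y" shows "x \<le> y"
proof -
  have "x \<le> zeta i" using assms by (auto simp: inP_def)
  also have "zeta i \<le> zeta (j - 1)" using assms by (intro zeta_le) auto
  also have "zeta (j - 1) \<le> y" using assms by (auto simp: inP_def)
  finally show ?thesis .
qed

lemma inP_zeta_int: assumes "j < N" "inP j x" "D x \<noteq> 0" shows "intP j x"
proof -
  have A: "j = 0 \<or> zeta (j - 1) < x"
  proof (cases "j = 0")
    case False
    then have "Suc (j - 1) < N" using assms(1) by simp
    then have "D (zeta (j - 1)) = 0" by (rule zeta(3))
    then have "x \<noteq> zeta (j - 1)" using assms(3) by auto
    moreover have "zeta (j - 1) \<le> x" using assms(2) False by (simp add: inP_def)
    ultimately show ?thesis by simp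
  qed simp
  have B: "Suc j = N \<or> x < zeta j"
  proof (cases "Suc j = N")
    case False
    then have "Suc j < N" using assms(1) by simp
    then have "D (zeta j) = 0" by (rule zeta(3))
    then have "x \<noteq> zeta j" using assms(3) by auto
    moreover have "x \<le> zeta j" using assms(2) False by (simp add: inP_def)
    ultimately show ?thesis by simp
  qed simp
  show ?thesis using A B by (simp add: intP_def)
qed

lemma ends: assumes "j < N" shows "\<exists>l r. inP j l \<and> inP j r \<and> (-1)^j * poly S l \<ge> 2 \<and> (-1)^j * poly S r \<le> -2"
proof -
  obtain l where l: "inP j l" "(-1)^j * poly S l \<ge> 2"
  proof (cases j)
    case 0
    obtain X where X: "\<forall>x\<le>X. poly S x > 2" using lft by blast
    define a where "a = min X (z 0 - 1)"
    have "inP 0 a" using zeta(1)[of 0] N2 by (auto simp: inP_def a_def)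
    moreover have "poly S a > 2" using X by (simp add: a_def)
    ultimately show ?thesis using that 0 by auto
  next
    case (Suc k)
    have v: "(-1)^k * poly S (zeta k) \<le> -2" using zeta_val[of k] Suc assms by auto
    have "inP j (zeta k)" using Suc assms zeta_le[of k "Suc k"] by (cases "Suc (Suc k) < N") (auto simp: inP_def)
    moreover have "(-1)^j * poly S (zeta k) \<ge> 2" using v Suc by simp
    ultimately show ?thesis using that by auto
  qed
  obtain r where r: "inP j r" "(-1)^j * poly S r \<le> -2"
  proof (cases "Suc j = N")
    case True
    obtain Y where Y: "\<forall>x\<ge>Y. (-1)^N * poly S x > 2" using rgt by blast
    define a where "a = max Y (z j + 1)"
    have "j = 0 \<or> zeta (j - 1) \<le> a"
    proof (cases j)
      case (Suc k)
      have "zeta k < z (Suc k)" using zeta(2)[of k] Suc assms by auto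
      then show ?thesis using Suc by (auto simp: a_def)
    qed simp
    then have "inP j a" using True by (auto simp: inP_def)
    moreover have "(-1)^N * poly S a > 2" using Y by (simp add: a_def)
    then have "(-1)^j * poly S a < -2" using True[symmetric] by simp
    ultimately show ?thesis using that by auto
  next
    case False
    then have jN: "Suc j < N" using assms by simp
    have "inP j (zeta j)" using jN zeta_le[of "j-1" j] by (auto simp: inP_def)
    then show ?thesis using that zeta_val[OF jN] by auto
  qed
  show ?thesis using l r by blast
qed

definition rho :: "real \<Rightarrow> nat \<Rightarrow> real" where
  "rho c j = (SOME x. inP j x \<and> poly S x = c)"

lemma rho: assumes "j < N" "\<bar>c\<bar> \<le> 2" shows "inP j (rho c j)" "poly S (rho c j) = c"
proof -
  obtain l r where lr: "inP j l" "inP j r" "(-1)^j * poly S l \<ge> 2" "(-1)^j * poly S r \<le> -2"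
    using ends[OF assms(1)] by blast
  have "l < r"
  proof (rule ccontr)
    assume "\<not> l < r"
    then have "r < l \<or> r = l" by auto
    then show False
    proof
      assume "r < l" then show False using Smono[OF assms(1) lr(2,1)] lr(3,4) by linarith
    qed (use lr in auto)
  qed
  have c: "-2 \<le> (-1)^j * c" "(-1)^j * c \<le> 2" using assms(2) by (auto simp: m1pow)
  have "\<exists>x. l \<le> x \<and> x \<le> r \<and> (\<lambda>x. (-1)^j * poly S x) x = (-1)^j * c"
    by (rule IVT2') (use lr c \<open>l < r\<close> in \<open>auto intro!: continuous_intros\<close>)
  then obtain x where x: "l \<le> x" "x \<le> r" "(-1)^j * poly S x = (-1)^j * c" by auto
  have "poly S x = c" using x(3) by (simp add: m1pow split: if_splits)
  moreover have "inP j x" using inP_conv[OF lr(1,2) x(1,2)] .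
  ultimately have ex: "\<exists>x. inP j x \<and> poly S x = c" by blast
  show "inP j (rho c j)" "poly S (rho c j) = c" using someI_ex[OF ex] unfolding rho_def by auto
qed

lemma rho_unique: "j < N \<Longrightarrow> \<bar>c\<bar> \<le> 2 \<Longrightarrow> inP j x \<Longrightarrow> poly S x = c \<Longrightarrow> x = rho c j"
  using rho[of j c] inj_piece[of j x "rho c j"] by auto

lemma rho_le_next: "Suc j < N \<Longrightarrow> \<bar>c\<bar> \<le> 2 \<Longrightarrow> rho c j \<le> rho c (Suc j)"
  using inP_order[of j "Suc j" "rho c j" "rho c (Suc j)"] rho[of j c] rho[of "Suc j" c] by auto

lemma rho_mono_c: assumes "j < N" "-2 \<le> c" "c < c'" "c' \<le> 2"
  shows "(even j \<longrightarrow> rho c' j < rho c j) \<and> (odd j \<longrightarrow> rho c j < rho c' j)"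
proof -
  have a: "\<bar>c\<bar> \<le> 2" "\<bar>c'\<bar> \<le> 2" using assms by auto
  note r1 = rho[OF assms(1) a(1)] and r2 = rho[OF assms(1) a(2)]
  have ne: "rho c j \<noteq> rho c' j" using r1(2) r2(2) assms(3) by auto
  show ?thesis
  proof (cases "rho c j < rho c' j")
    case True
    have "(-1)^j * c' < (-1)^j * c" using Smono[OF assms(1) r1(1) r2(1) True] r1(2) r2(2) by simp
    then have "odd j" using assms(3) by (auto simp: m1pow split: if_splits)
    then show ?thesis using True by auto
  next
    case False
    then have lt: "rho c' j < rho c j" using ne by auto
    have "(-1)^j * c < (-1)^j * c'" using Smono[OF assms(1) r2(1) r1(1) lt] r1(2) r2(2) by simp
    then have "even j" using assms(3) by (auto simp: m1pow split: if_splits)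
    then show ?thesis using lt by auto
  qed
qed

lemma pieces_zeta: assumes "Suc i < N" shows "{j. j < N \<and> inP j (zeta i)} = {i, Suc i}"
proof
  show "{i, Suc i} \<subseteq> {j. j < N \<and> inP j (zeta i)}"
    using assms zeta_le[of "i-1" i] zeta_le[of i "Suc i"]
    by (cases "Suc (Suc i) < N") (auto simp: inP_def)
next
  show "{j. j < N \<and> inP j (zeta i)} \<subseteq> {i, Suc i}"
  proof
    fix j assume j: "j \<in> {j. j < N \<and> inP j (zeta i)}"
    show "j \<in> {i, Suc i}"
    proof (rule ccontr)
      assume nj: "j \<notin> {i, Suc i}"
      then have "j < i \<or> Suc i < j" by auto
      then show False
      proof
        assume "j < i"
        then have "zeta i \<le> zeta j" "zeta j < zeta i" using j assms zeta_less[of j i] by (auto simp: inP_def)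
        then show False by simp
      next
        assume "Suc i < j"
        then have a: "i < j - 1" "Suc (j - 1) < N" using j by auto
        have "zeta i < zeta (j - 1)" using zeta_less[OF a] .
        moreover have "zeta (j - 1) \<le> zeta i" using j \<open>Suc i < j\<close> by (auto simp: inP_def)
        ultimately show False by simp
      qed
    qed
  qed
qed

lemma pieces_other: assumes "\<forall>i. Suc i < N \<longrightarrow> x \<noteq> zeta i"
  shows "\<exists>j. {j'. j' < N \<and> inP j' x} = {j}"
proof -
  obtain j where j: "j < N" "inP j x" using inP_ex by blast
  have "\<forall>k. k < N \<and> inP k x \<longrightarrow> k = j"
  proof (intro allI impI)
    fix k assume k: "k < N \<and> inP k x"
    { fix a b assume ab: "a < b" "b < N" "inP a x" "inP b x"
      have "x \<le> zeta a" "zeta (b - 1) \<le> x" using ab by (auto simp: inP_def)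
      moreover have "zeta a \<le> zeta (b - 1)" using ab by (intro zeta_le) auto
      ultimately have "x = zeta a" by simp
      then have False using assms ab by auto }
    then show "k = j" using j k by (metis linorder_neqE_nat)
  qed
  then show ?thesis using j by auto
qed

lemma card_rho: assumes "\<bar>c\<bar> \<le> 2" "poly S x = c"
  shows "card {j. j < N \<and> rho c j = x} = (if D x = 0 then 2 else 1)"
proof -
  have eq: "{j. j < N \<and> rho c j = x} = {j. j < N \<and> inP j x}"
    using rho[OF _ assms(1)] rho_unique[OF _ assms(1) _ assms(2)] by blast
  show ?thesis
  proof (cases "D x = 0")
    case True
    then obtain i where i: "Suc i < N" "x = zeta i" using dS_root by blast
    have "card {j. j < N \<and> inP j x} = 2" using pieces_zeta[OF i(1)] i(2) by simp
    then show ?thesis using True eq by simp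
  next
    case False
    then have "\<forall>i. Suc i < N \<longrightarrow> x \<noteq> zeta i" using zeta(3) by auto
    then obtain j where "{j'. j' < N \<and> inP j' x} = {j}" using pieces_other by blast
    then show ?thesis using False unfolding eq by simp
  qed
qed

lemma rho_inj_open: assumes "\<bar>c\<bar> < 2" "i < N" "j < N" "rho c i = rho c j" shows "i = j"
proof -
  have "poly S (rho c i) = c" using rho assms by auto
  then have "card {k. k < N \<and> rho c k = rho c i} = 1" using card_rho[of c "rho c i"] assms(1) H2 by auto
  then obtain a where a: "{k. k < N \<and> rho c k = rho c i} = {a}" by (rule card_1_singletonE)
  have "i \<in> {k. k < N \<and> rho c k = rho c i}" "j \<in> {k. k < N \<and> rho c k = rho c i}" using assms by auto
  then show ?thesis unfolding a by simp
qed

definition lo :: "nat \<Rightarrow> real" where "lo j = rho ((-1)^j * 2) j"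
definition hi :: "nat \<Rightarrow> real" where "hi j = rho (- ((-1)^j * 2)) j"

lemma lohi: assumes "j < N" shows "inP j (lo j)" "(-1)^j * poly S (lo j) = 2"
  "inP j (hi j)" "(-1)^j * poly S (hi j) = -2"
  using rho[OF assms, of "(-1)^j * 2"] rho[OF assms, of "- ((-1)^j * 2)"] unfolding lo_def hi_def
  by (auto simp: m1pow)

lemma lo_hi_rho: "lo j = (if even j then rho 2 j else rho (-2) j)" "hi j = (if even j then rho (-2) j else rho 2 j)"
  by (auto simp: lo_def hi_def)

lemma in_band: assumes "j < N" "inP j x" "\<bar>poly S x\<bar> < 2" shows "lo j < x" "x < hi j"
proof -
  note L = lohi[OF assms(1)]
  have g: "(-1)^j * poly S x < 2" "-2 < (-1)^j * poly S x" using assms(3) by (auto simp: m1pow)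
  show "lo j < x"
  proof (rule ccontr)
    assume "\<not> lo j < x"
    then have "x < lo j \<or> x = lo j" by auto
    then show False
    proof
      assume "x < lo j" then show False using Smono[OF assms(1) assms(2) L(1)] L(2) g by linarith
    qed (use L g in auto)
  qed
  show "x < hi j"
  proof (rule ccontr)
    assume "\<not> x < hi j"
    then have "hi j < x \<or> x = hi j" by auto
    then show False
    proof
      assume "hi j < x" then show False using Smono[OF assms(1) L(3) assms(2)] L(4) g by linarith
    qed (use L g in auto)
  qed
qed

lemma gap_root:
  fixes H :: "real poly"
  assumes Hs: "\<forall>x. \<bar>poly S x\<bar> < 2 \<longrightarrow> poly H x * D x > 0" and jN: "Suc j < N"
  shows "\<exists>r. poly H r = 0 \<and> hi j \<le> r \<and> r \<le> lo (Suc j)"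
proof -
  have j1: "j < N" using jN by simp
  define x1 where "x1 = rho 0 j"
  define x2 where "x2 = rho 0 (Suc j)"
  have r1: "inP j x1" "poly S x1 = 0" using rho[OF j1, of 0] by (auto simp: x1_def)
  have r2: "inP (Suc j) x2" "poly S x2 = 0" using rho[OF jN, of 0] by (auto simp: x2_def)
  have D1: "D x1 \<noteq> 0" "D x2 \<noteq> 0" using H2 r1(2) r2(2) by auto
  have i1: "intP j x1" using inP_zeta_int[OF j1 r1(1) D1(1)] .
  have i2: "intP (Suc j) x2" using inP_zeta_int[OF jN r2(1) D1(2)] .
  have s1: "(-1)^j * D x1 < 0" using dec_all[OF j1 i1] .
  have s2: "(-1)^(Suc j) * D x2 < 0" using dec_all[OF jN i2] .
  have DD: "D x1 * D x2 < 0"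
  proof -
    have s2': "(-1)^j * D x2 > 0" using s2 by simp
    have "((-1)^j * D x1) * ((-1)^j * D x2) < 0" using s1 s2' by (rule mult_neg_pos)
    moreover have "((-1)^j * D x1) * ((-1)^j * D x2) = ((-1::real)^j * (-1)^j) * (D x1 * D x2)"
      by (simp only: mult_ac)
    ultimately show ?thesis by (simp only: m1sq mult_1_left)
  qed
  have HD1: "poly H x1 * D x1 > 0" and HD2: "poly H x2 * D x2 > 0" using Hs r1(2) r2(2) by auto
  have HH: "poly H x1 * poly H x2 < 0"
  proof -
    have "(poly H x1 * D x1) * (poly H x2 * D x2) > 0" using HD1 HD2 by simp
    moreover have "(poly H x1 * D x1) * (poly H x2 * D x2) = (poly H x1 * poly H x2) * (D x1 * D x2)"
      by (simp add: algebra_simps)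
    ultimately have "(poly H x1 * poly H x2) * (D x1 * D x2) > 0" by simp
    moreover have "\<And>a b::real. a * b > 0 \<Longrightarrow> b < 0 \<Longrightarrow> a < 0" by (auto simp: zero_less_mult_iff)
    ultimately show ?thesis using DD by blast
  qed
  have "x1 \<le> x2" using inP_order[OF _ jN r1(1) r2(1)] by simp
  moreover have "x1 \<noteq> x2"
  proof
    assume "x1 = x2"
    then have "{j, Suc j} \<subseteq> {k. k < N \<and> inP k x1}" using r1 r2 jN by auto
    moreover obtain k where "{k'. k' < N \<and> inP k' x1} = {k}"
      using pieces_other[of x1] D1(1) zeta(3) by metis
    ultimately show False by auto
  qed
  ultimately have "x1 < x2" by simp
  then obtain r where r: "x1 < r" "r < x2" "poly H r = 0" using poly_IVT[OF _ HH] by auto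
  have nb: "\<not> \<bar>poly S r\<bar> < 2" using Hs r(3) by auto
  have "hi j \<le> r"
  proof (rule ccontr)
    assume "\<not> hi j \<le> r"
    then have lt: "r < hi j" by simp
    note L = lohi[OF j1]
    have ir: "inP j r" using inP_conv[OF r1(1) L(3)] r(1) lt by auto
    have "(-1)^j * poly S r < (-1)^j * poly S x1" using Smono[OF j1 r1(1) ir r(1)] .
    moreover have "(-1)^j * poly S (hi j) < (-1)^j * poly S r" using Smono[OF j1 ir L(3) lt] .
    ultimately have "\<bar>(-1)^j * poly S r\<bar> < 2" using L(4) r1(2) by simp
    then show False using nb unfolding abs_m1 by simp
  qed
  moreover have "r \<le> lo (Suc j)"
  proof (rule ccontr)
    assume "\<not> r \<le> lo (Suc j)"
    then have lt: "lo (Suc j) < r" by simp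
    note L = lohi[OF jN]
    have ir: "inP (Suc j) r" using inP_conv[OF L(1) r2(1)] r(2) lt by auto
    have "(-1)^(Suc j) * poly S x2 < (-1)^(Suc j) * poly S r" using Smono[OF jN ir r2(1) r(2)] .
    moreover have "(-1)^(Suc j) * poly S r < (-1)^(Suc j) * poly S (lo (Suc j))" using Smono[OF jN L(1) ir lt] .
    ultimately have "\<bar>(-1)^(Suc j) * poly S r\<bar> < 2" using L(2) r2(2) by simp
    then show False using nb unfolding abs_m1 by simp
  qed
  ultimately show ?thesis using r(3) by blast
qed

end

definition ce :: "real poly \<Rightarrow> complex \<Rightarrow> complex" where
  "ce p z = poly (map_poly of_real p) z"

lemma mp_add: "map_poly (of_real :: real \<Rightarrow> complex) (p + q) = map_poly of_real p + map_poly of_real q"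
  by (rule poly_eqI) (simp add: coeff_map_poly)
lemma mp_diff: "map_poly (of_real :: real \<Rightarrow> complex) (p - q) = map_poly of_real p - map_poly of_real q"
  by (rule poly_eqI) (simp add: coeff_map_poly)
lemma mp_mult: "map_poly (of_real :: real \<Rightarrow> complex) (p * q) = map_poly of_real p * map_poly of_real q"
  by (rule poly_eqI) (simp add: coeff_map_poly coeff_mult)
lemma mp_smult: "map_poly (of_real :: real \<Rightarrow> complex) (smult a p) = smult (of_real a) (map_poly of_real p)"
  by (rule poly_eqI) (simp add: coeff_map_poly)

lemma ce_add: "ce (p + q) z = ce p z + ce q z" by (simp add: ce_def mp_add)
lemma ce_diff: "ce (p - q) z = ce p z - ce q z" by (simp add: ce_def mp_diff)
lemma ce_mult: "ce (p * q) z = ce p z * ce q z" by (simp add: ce_def mp_mult)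
lemma ce_smult: "ce (smult a p) z = of_real a * ce p z" by (simp add: ce_def mp_smult)
lemma ce_const: "ce [:a:] z = of_real a" by (simp add: ce_def map_poly_pCons)
lemma ce_lin: "ce [:a, b:] z = of_real a + of_real b * z" by (simp add: ce_def map_poly_pCons)
lemma ce_one: "ce 1 z = 1" by (simp add: ce_def)
lemma ce_real: "ce p (of_real x) = of_real (poly p x)"
  unfolding ce_def by (induction p) (auto simp: map_poly_pCons)

definition omg :: "complex \<Rightarrow> complex \<Rightarrow> complex" where "omg a b = cnj a * b - cnj b * a"

lemma cnj_sq: "cnj a * a = complex_of_real ((cmod a)^2)"
  by (metis complex_norm_square mult.commute of_real_power)

context slp begin

lemma ce_fi: "ce (fi n * p) z = of_real (1 / f n) * ce p z" unfolding fi_def ce_mult ce_const ..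
lemma ce_av: "ce (av n * p) z = (of_real (q n) - z * of_real (w n)) * ce p z"
  unfolding av_def ce_mult ce_lin by (simp add: algebra_simps)

definition cy :: "complex \<Rightarrow> complex \<Rightarrow> complex \<Rightarrow> nat \<Rightarrow> complex" where
  "cy z v1 v2 n = ce (pA n) z * v1 + ce (pB n) z * v2"
definition cu :: "complex \<Rightarrow> complex \<Rightarrow> complex \<Rightarrow> nat \<Rightarrow> complex" where
  "cu z v1 v2 n = ce (pC n) z * v1 + ce (pD n) z * v2"

lemma cy0: "cy z v1 v2 0 = v1" and cu0: "cu z v1 v2 0 = v2"
  by (simp_all add: cy_def cu_def ce_one ce_def)

lemma cy_Suc: "cy z v1 v2 (Suc n) = cy z v1 v2 n + of_real (1 / f n) * cu z v1 v2 n"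
  by (simp add: cy_def cu_def ce_add ce_fi pA.simps(2) pB.simps(2) algebra_simps)

lemma cu_Suc: "cu z v1 v2 (Suc n) = cu z v1 v2 n + (of_real (q (Suc n)) - z * of_real (w (Suc n))) * cy z v1 v2 (Suc n)"
  by (simp add: cy_def cu_def ce_add ce_av pC_Suc' pD_Suc' algebra_simps)

lemma green: "omg (cy z v1 v2 n) (cu z v1 v2 n) = omg v1 v2 - (z - cnj z) * (\<Sum>k\<in>{1..n}. of_real (w k) * (cnj (cy z v1 v2 k) * cy z v1 v2 k))"
proof (induction n)
  case 0 then show ?case by (simp add: cy0 cu0)
next
  case (Suc n)
  define y where "y = cy z v1 v2 n"
  define u where "u = cu z v1 v2 n"
  define r where "r = (of_real (1 / f n) :: complex)"
  define a where "a = (of_real (q (Suc n)) - z * of_real (w (Suc n)) :: complex)"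
  have cr: "cnj r = r" by (simp add: r_def)
  have ca: "cnj a = of_real (q (Suc n)) - cnj z * of_real (w (Suc n))" by (simp add: a_def)
  have ys: "cy z v1 v2 (Suc n) = y + r * u" by (simp add: cy_Suc y_def u_def r_def)
  have us: "cu z v1 v2 (Suc n) = u + a * (y + r * u)" by (simp add: cu_Suc ys a_def u_def)
  have "omg (y + r * u) (u + a * (y + r * u)) = omg y u - (z - cnj z) * (of_real (w (Suc n)) * (cnj (y + r * u) * (y + r * u)))"
    unfolding omg_def complex_cnj_add complex_cnj_mult cr ca by (simp add: a_def algebra_simps)
  then have "omg (cy z v1 v2 (Suc n)) (cu z v1 v2 (Suc n)) = omg y u - (z - cnj z) * (of_real (w (Suc n)) * (cnj (cy z v1 v2 (Suc n)) * cy z v1 v2 (Suc n)))"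
    unfolding ys us .
  also have "omg y u = omg v1 v2 - (z - cnj z) * (\<Sum>k\<in>{1..n}. of_real (w k) * (cnj (cy z v1 v2 k) * cy z v1 v2 k))"
    using Suc unfolding y_def u_def .
  finally show ?case by (simp add: sum.cl_ivl_Suc algebra_simps)
qed

end

lemma kernel_ex:
  fixes a b c d :: complex
  assumes "a * d - b * c = 0"
  shows "\<exists>x y. (x \<noteq> 0 \<or> y \<noteq> 0) \<and> a * x + b * y = 0 \<and> c * x + d * y = 0"
proof (cases "a \<noteq> 0 \<or> b \<noteq> 0")
  case True
  show ?thesis by (rule exI[of _ b], rule exI[of _ "-a"]) (use True assms in \<open>auto simp: algebra_simps\<close>)
next
  case False
  show ?thesis
  proof (cases "c \<noteq> 0 \<or> d \<noteq> 0")
    case True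
    show ?thesis by (rule exI[of _ d], rule exI[of _ "-c"]) (use True False in \<open>auto simp: algebra_simps\<close>)
  next
    case False2: False
    show ?thesis by (rule exI[of _ 1], rule exI[of _ 0]) (use False False2 in auto)
  qed
qed

lemma omg_lin: fixes m11 m12 m21 m22 :: real and v1 v2 :: complex
  shows "omg (of_real m11 * v1 + of_real m12 * v2) (of_real m21 * v1 + of_real m22 * v2) = of_real (m11 * m22 - m12 * m21) * omg v1 v2"
  unfolding omg_def by (simp add: algebra_simps)

lemma omg_i: "omg (\<i> * p) (\<i> * r) = omg p r"
  unfolding omg_def by (simp add: algebra_simps)

locale sl = slp +
  fixes N :: nat
  assumes N2: "N \<ge> 2"
    and f_nz: "\<forall>n\<le>N. f n \<noteq> 0"
    and w_pos: "\<forall>n\<in>{1..N}. w n > 0"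
    and prod_pos: "(\<Prod>i<N. 1 / f i) > 0"
begin

lemma cy12_zero: assumes "cy z v1 v2 1 = 0" "cy z v1 v2 2 = 0" shows "v1 = 0" "v2 = 0"
proof -
  have f0: "f 0 \<noteq> 0" and f1: "f 1 \<noteq> 0" using f_nz N2 by auto
  have y1: "cy z v1 v2 1 = v1 + of_real (1 / f 0) * v2" using cy_Suc[of z v1 v2 0] by (simp add: cy0 cu0)
  have u1: "cu z v1 v2 1 = v2 + (of_real (q 1) - z * of_real (w 1)) * cy z v1 v2 1" using cu_Suc[of z v1 v2 0] by (simp add: cu0)
  have y2: "cy z v1 v2 2 = cy z v1 v2 1 + of_real (1 / f 1) * cu z v1 v2 1" using cy_Suc[of z v1 v2 1] by (simp add: numeral_2_eq_2)
  have "cu z v1 v2 1 = 0" using y2 assms f1 by simp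
  then have "v2 = 0" using u1 assms by simp
  moreover then have "v1 = 0" using y1 assms by simp
  ultimately show "v1 = 0" "v2 = 0" by auto
qed

lemma sum_sq_zero:
  assumes "(\<Sum>k\<in>{1..N}. of_real (w k) * (cnj (y k) * y k)) = (0::complex)"
  shows "y 1 = 0" "y 2 = 0"
proof -
  have "(\<Sum>k\<in>{1..N}. of_real (w k) * (cnj (y k) * y k)) = (of_real (\<Sum>k\<in>{1..N}. w k * (cmod (y k))^2) :: complex)"
    by (simp only: cnj_sq of_real_sum of_real_mult)
  then have "(\<Sum>k\<in>{1..N}. w k * (cmod (y k))^2) = 0" using assms by (metis of_real_eq_0_iff)
  moreover have "\<forall>k\<in>{1..N}. w k * (cmod (y k))^2 \<ge> 0" using w_pos by (auto intro: less_imp_le)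
  ultimately have z: "\<forall>k\<in>{1..N}. w k * (cmod (y k))^2 = 0"
    using sum_nonneg_eq_0_iff[of "{1..N}" "\<lambda>k. w k * (cmod (y k))^2"] by blast
  have "1 \<in> {1..N}" "2 \<in> {1..N}" using N2 by auto
  then have "w 1 * (cmod (y 1))^2 = 0" "w 2 * (cmod (y 2))^2 = 0" "w 1 > 0" "w 2 > 0" using z w_pos by auto
  then show "y 1 = 0" "y 2 = 0" by auto
qed

end

locale slM = sl +
  fixes m11 m12 m21 m22 :: real
  assumes detM: "m11 * m22 - m12 * m21 = 1"
begin

definition Tp :: "real poly" where
  "Tp = [:m22:] * pA N - [:m12:] * pC N - [:m21:] * pB N + [:m11:] * pD N"
definition Pa :: "real poly" where "Pa = [:m22:] * pA N - [:m12:] * pC N"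
definition Pb :: "real poly" where "Pb = [:m22:] * pB N - [:m12:] * pD N"
definition Pc :: "real poly" where "Pc = [:m11:] * pC N - [:m21:] * pA N"
definition Pd :: "real poly" where "Pd = [:m11:] * pD N - [:m21:] * pB N"

lemma Tp_eq: "Tp = Pa + Pd" by (simp add: Tp_def Pa_def Pd_def algebra_simps)

lemma cdet: "[:m11:] * [:m22:] - [:m12:] * [:m21:] = (1 :: real poly)"
  using detM by (simp add: one_pCons; simp add: algebra_simps)

lemma Pdet: "Pa * Pd - Pb * Pc = 1"
  using det_one[of N] cdet unfolding Pa_def Pb_def Pc_def Pd_def by algebra

lemma dTp: "pderiv Tp = - Pb * g11 N + (Pa - Pd) * g12 N + Pc * g22 N"
proof -
  have "pderiv Tp = [:m22:] * pderiv (pA N) - [:m12:] * pderiv (pC N) - [:m21:] * pderiv (pB N) + [:m11:] * pderiv (pD N)"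
    unfolding Tp_def by (simp add: pderiv_add pderiv_diff pderiv_mult pderiv_smult)
  then show ?thesis using pderiv_all[of N] unfolding Pa_def Pb_def Pc_def Pd_def by algebra
qed

definition Qf :: "real \<Rightarrow> real \<Rightarrow> real \<Rightarrow> real" where
  "Qf x y1 y2 = - poly Pb x * y1^2 + (poly Pa x - poly Pd x) * y1 * y2 + poly Pc x * y2^2"

lemma Dform: "poly (pderiv Tp) x = (\<Sum>k\<in>{1..N}. w k * Qf x (poly (pA k) x) (poly (pB k) x))"
  unfolding dTp g11_def g12_def g22_def Qf_def
  by (simp add: poly_sum sum_distrib_left sum_distrib_right sum.distrib[symmetric] sum_subtractf[symmetric]
       algebra_simps power2_eq_square)

lemma Pdet_x: "poly Pa x * poly Pd x - poly Pb x * poly Pc x = 1"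
  using arg_cong[OF Pdet, of "\<lambda>p. poly p x"] by simp

lemma Tp_x: "poly Tp x = poly Pa x + poly Pd x" by (simp add: Tp_eq)

lemma Q4: "4 * poly Pc x * Qf x y1 y2 = (2 * poly Pc x * y2 + (poly Pa x - poly Pd x) * y1)^2 - ((poly Tp x)^2 - 4) * y1^2"
  using Pdet_x[of x] unfolding Qf_def Tp_x by (simp add: algebra_simps power2_eq_square)

lemma A1: "pA 1 = 1" by (simp add: pA.simps)
lemma B1: "pB 1 = [:1 / f 0:]" by (simp add: pB.simps fi_def)
lemma A1': "pA (Suc 0) = 1" by (simp add: pA.simps)
lemma B1': "pB (Suc 0) = [:1 / f 0:]" by (simp add: pB.simps fi_def)

lemma band_pos: assumes "\<bar>poly Tp x\<bar> < 2" shows "poly Pc x * poly (pderiv Tp) x > 0"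
proof -
  have "(poly Tp x - 2) * (poly Tp x + 2) < 0" by (rule mult_neg_pos) (use assms in auto)
  then have disc: "(poly Tp x)^2 - 4 < 0" by (simp add: algebra_simps power2_eq_square)
  have nn: "\<forall>k\<in>{1..N}. w k * (4 * poly Pc x * Qf x (poly (pA k) x) (poly (pB k) x)) \<ge> 0"
  proof
    fix k assume k: "k \<in> {1..N}"
    have "4 * poly Pc x * Qf x (poly (pA k) x) (poly (pB k) x) \<ge> 0"
    proof -
      have "((poly Tp x)^2 - 4) * (poly (pA k) x)^2 \<le> 0" by (rule mult_nonpos_nonneg) (use disc in auto)
      then show ?thesis unfolding Q4 using zero_le_power2[of "2 * poly Pc x * poly (pB k) x + (poly Pa x - poly Pd x) * poly (pA k) x"] by linarith
    qed
    then show "w k * (4 * poly Pc x * Qf x (poly (pA k) x) (poly (pB k) x)) \<ge> 0"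
      by (rule mult_nonneg_nonneg[rotated]) (use w_pos k in \<open>auto intro: less_imp_le\<close>)
  qed
  have p1: "w 1 * (4 * poly Pc x * Qf x (poly (pA 1) x) (poly (pB 1) x)) > 0"
  proof -
    have "4 * poly Pc x * Qf x (poly (pA 1) x) (poly (pB 1) x) > 0"
    proof -
      have e: "4 * poly Pc x * Qf x (poly (pA 1) x) (poly (pB 1) x) = (2 * poly Pc x * poly (pB 1) x + (poly Pa x - poly Pd x))^2 - ((poly Tp x)^2 - 4)"
        using Q4[of x "poly (pA 1) x" "poly (pB 1) x"] unfolding A1 by simp
      have sq: "0 \<le> (2 * poly Pc x * poly (pB 1) x + (poly Pa x - poly Pd x))^2" by simp
      show ?thesis unfolding e using sq disc by linarith
    qed
    then show ?thesis using w_pos N2 by simp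
  qed
  have "(\<Sum>k\<in>{1..N}. w k * (4 * poly Pc x * Qf x (poly (pA k) x) (poly (pB k) x))) > 0"
    by (rule sum_pos2[of _ 1]) (use nn p1 N2 in auto)
  moreover have "(\<Sum>k\<in>{1..N}. w k * (4 * poly Pc x * Qf x (poly (pA k) x) (poly (pB k) x))) = 4 * (poly Pc x * poly (pderiv Tp) x)"
    unfolding Dform by (simp add: sum_distrib_left algebra_simps)
  ultimately show ?thesis by simp
qed

lemma band_D: "\<bar>poly Tp x\<bar> < 2 \<Longrightarrow> poly (pderiv Tp) x \<noteq> 0"
  using band_pos by fastforce


lemma indep2: "poly (pB 2) x - poly (pA 2) x * poly (pB 1) x = 1 / f 1"
proof -
  have f0: "f 0 \<noteq> 0" and f1: "f 1 \<noteq> 0" using f_nz N2 by auto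
  have "pA 2 = pA 1 + fi 1 * pC 1" "pB 2 = pB 1 + fi 1 * pD 1" by (simp_all add: numeral_2_eq_2 pA.simps pB.simps)
  moreover have "pC 1 = av 1" "pD 1 = 1 + av 1 * fi 0" by (simp_all add: pC.simps pD.simps pA.simps pB.simps)
  ultimately show ?thesis using f0 f1 by (simp add: A1' B1' fi_def av_def field_simps)
qed

lemma edge: assumes "(poly Tp x)^2 = 4" "poly (pderiv Tp) x = 0"
  shows "poly Pb x = 0" "poly Pc x = 0" "poly Pa x = poly Pd x"
proof -
  define a where "a = poly Pa x"
  define b where "b = poly Pb x"
  define c where "c = poly Pc x"
  define d where "d = poly Pd x"
  have disc: "(a - d)^2 + 4 * b * c = 0"
    using Pdet_x[of x] assms(1) unfolding Tp_x a_def b_def c_def d_def by (simp add: algebra_simps power2_eq_square)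
  have c0: "c = 0"
  proof (rule ccontr)
    assume cnz: "c \<noteq> 0"
    define l where "l k = 2 * c * poly (pB k) x + (a - d) * poly (pA k) x" for k
    have "4 * c * poly (pderiv Tp) x = (\<Sum>k\<in>{1..N}. w k * (l k)^2)"
    proof -
      have "4 * c * Qf x (poly (pA k) x) (poly (pB k) x) = (l k)^2" for k
        using Q4[of x "poly (pA k) x" "poly (pB k) x"] assms(1) unfolding l_def a_def c_def d_def
        by simp
      then show ?thesis unfolding Dform by (simp add: sum_distrib_left algebra_simps)
    qed
    then have s0: "(\<Sum>k\<in>{1..N}. w k * (l k)^2) = 0" using assms(2) by simp
    have "\<forall>k\<in>{1..N}. w k * (l k)^2 \<ge> 0" using w_pos by (auto intro: less_imp_le)
    then have z: "\<forall>k\<in>{1..N}. w k * (l k)^2 = 0" using s0 sum_nonneg_eq_0_iff[of "{1..N}" "\<lambda>k. w k * (l k)^2"] by blast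
    have "w 1 * (l 1)^2 = 0" "w 2 * (l 2)^2 = 0" "w 1 > 0" "w 2 > 0" using z w_pos N2 by auto
    then have l12: "l 1 = 0" "l 2 = 0" by auto
    have "l 2 - poly (pA 2) x * l 1 = 2 * c * (poly (pB 2) x - poly (pA 2) x * poly (pB 1) x)"
      unfolding l_def A1 by (simp add: algebra_simps)
    then have "2 * c * (1 / f 1) = 0" using l12 indep2 by simp
    then show False using cnz f_nz N2 by auto
  qed
  have ad: "a = d" using disc c0 by simp
  have "poly (pderiv Tp) x = - b * (\<Sum>k\<in>{1..N}. w k * (poly (pA k) x)^2)"
    unfolding Dform Qf_def using c0 ad unfolding a_def b_def c_def d_def by (simp add: sum_distrib_left algebra_simps)
  moreover have "(\<Sum>k\<in>{1..N}. w k * (poly (pA k) x)^2) > 0"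
  proof (rule sum_pos2[of _ 1])
    show "0 < w 1 * (poly (pA 1) x)^2" using w_pos N2 by (simp add: A1')
    fix i assume "i \<in> {1..N}"
    then have "w i > 0" using w_pos by auto
    then show "0 \<le> w i * (poly (pA i) x)^2" by simp
  qed (use N2 in auto)
  ultimately have "b = 0" using assms(2) by simp
  then show "poly Pb x = 0" "poly Pc x = 0" "poly Pa x = poly Pd x" using c0 ad by (auto simp: a_def b_def c_def d_def)
qed

lemma edge_conv: "poly Pb x = 0 \<Longrightarrow> poly Pc x = 0 \<Longrightarrow> poly Pa x = poly Pd x \<Longrightarrow> poly (pderiv Tp) x = 0"
  unfolding Dform Qf_def by simp

lemma real_root: assumes "ce Tp z = 0" shows "Im z = 0"
proof (rule ccontr)
  assume imz: "Im z \<noteq> 0"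
  define Az where "Az = ce (pA N) z"
  define Bz where "Bz = ce (pB N) z"
  define Cz where "Cz = ce (pC N) z"
  define Dz where "Dz = ce (pD N) z"
  have det: "Az * Dz - Bz * Cz = 1"
    using arg_cong[OF det_one[of N], of "\<lambda>p. ce p z"] unfolding Az_def Bz_def Cz_def Dz_def
    by (simp add: ce_diff ce_mult ce_one)
  have T: "of_real m22 * Az - of_real m12 * Cz - of_real m21 * Bz + of_real m11 * Dz = 0"
    using assms unfolding Tp_def Az_def Bz_def Cz_def Dz_def by (simp add: ce_add ce_diff ce_mult ce_const ce_smult)
  have dM: "of_real m11 * of_real m22 - of_real m12 * of_real m21 = (1::complex)"
    using detM by (metis of_real_1 of_real_diff of_real_mult)
  have "(\<i> * of_real m11 - Az) * (\<i> * of_real m22 - Dz) - (\<i> * of_real m12 - Bz) * (\<i> * of_real m21 - Cz) = 0"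
  proof -
    have "(\<i> * of_real m11 - Az) * (\<i> * of_real m22 - Dz) - (\<i> * of_real m12 - Bz) * (\<i> * of_real m21 - Cz)
       = - (of_real m11 * of_real m22 - of_real m12 * of_real m21) - \<i> * (of_real m22 * Az - of_real m12 * Cz - of_real m21 * Bz + of_real m11 * Dz) + (Az * Dz - Bz * Cz)"
      by (simp add: algebra_simps)
    then show ?thesis unfolding det T dM by simp
  qed
  then obtain v1 v2 where v: "v1 \<noteq> 0 \<or> v2 \<noteq> 0" "(\<i> * of_real m11 - Az) * v1 + (\<i> * of_real m12 - Bz) * v2 = 0"
      "(\<i> * of_real m21 - Cz) * v1 + (\<i> * of_real m22 - Dz) * v2 = 0"
    using kernel_ex by blast
  have yN: "cy z v1 v2 N = \<i> * (of_real m11 * v1 + of_real m12 * v2)"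
    using v(2) unfolding cy_def Az_def[symmetric] Bz_def[symmetric] by (simp add: algebra_simps)
  have uN: "cu z v1 v2 N = \<i> * (of_real m21 * v1 + of_real m22 * v2)"
    using v(3) unfolding cu_def Cz_def[symmetric] Dz_def[symmetric] by (simp add: algebra_simps)
  have "omg (cy z v1 v2 N) (cu z v1 v2 N) = omg v1 v2"
    unfolding yN uN omg_i omg_lin detM by simp
  then have "(z - cnj z) * (\<Sum>k\<in>{1..N}. of_real (w k) * (cnj (cy z v1 v2 k) * cy z v1 v2 k)) = 0"
    using green[of z v1 v2 N] by simp
  moreover have "z - cnj z \<noteq> 0" using imz by (simp add: complex_eq_iff)
  ultimately have "(\<Sum>k\<in>{1..N}. of_real (w k) * (cnj (cy z v1 v2 k) * cy z v1 v2 k)) = 0" by simp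
  then have "cy z v1 v2 1 = 0" "cy z v1 v2 2 = 0" using sum_sq_zero[of "cy z v1 v2"] by auto
  then show False using cy12_zero v(1) by blast
qed

end

lemma m1sq2: "((-1::real)^n) * (-1)^n = 1" by (induction n) auto

lemma mp_pderiv: "pderiv (map_poly (of_real :: real \<Rightarrow> complex) p) = map_poly of_real (pderiv p)"
  by (rule poly_eqI) (simp add: coeff_map_poly coeff_pderiv)

lemma pinf_gt:
  fixes p :: "real poly"
  assumes "degree p > 0" "lead_coeff p > 0"
  shows "\<exists>n. \<forall>x\<ge>n. poly p x > 2"
proof -
  define r where "r = [:-3:] + p"
  have "lead_coeff r = lead_coeff p" unfolding r_def by (rule lead_coeff_add_le) (use assms in simp)
  then obtain n where n: "\<forall>x\<ge>n. poly r x \<ge> lead_coeff r" using poly_pinfty_gt_lc[of r] assms by auto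
  show ?thesis
  proof (intro exI allI impI)
    fix x assume "x \<ge> n"
    then have "poly r x \<ge> lead_coeff p" using n \<open>lead_coeff r = lead_coeff p\<close> by auto
    then show "poly p x > 2" using assms(2) by (simp add: r_def)
  qed
qed

locale slMp = slM +
  assumes Mpos: "m11 - f 0 * m12 > 0"
begin

lemma FF_pos: "FF N > 0"
proof -
  have "(\<Prod>i<N. 1 / f i) = inverse (FF N)"
    unfolding FF_def using prod_inversef[of f "{..<N}"] by (simp add: o_def inverse_eq_divide)
  then show ?thesis using prod_pos by simp
qed

lemma WW_pos: "WW N > 0" unfolding WW_def using w_pos by (intro linordered_semidom_class.prod_pos) auto

lemma Tp_lead: "degree Tp = N" "(-1)^N * coeff Tp N > 0"
proof -
  have fk: "\<forall>k\<le>N - 1. f k \<noteq> 0" using f_nz by auto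
  have NS: "Suc (N - 1) = N" using N2 by simp
  note dc = deg_coeff[OF fk, unfolded NS]
  have dle: "degree Tp \<le> N" unfolding Tp_def using dc
    by (auto intro!: degree_add_le degree_diff_le order.trans[OF degree_smult_le])
  have cA: "coeff (pA N) N = 0" "coeff (pB N) N = 0" using dc N2 by (auto intro!: coeff_eq_0)
  have "coeff Tp N = m11 * coeff (pD N) N - m12 * coeff (pC N) N"
    unfolding Tp_def using cA by simp
  also have "\<dots> = (-1)^N * (WW N / FF N) * (m11 - f 0 * m12)"
    using dc NS FF_pos by (simp add: field_simps)
  finally have c: "coeff Tp N = (-1)^N * (WW N / FF N) * (m11 - f 0 * m12)" .
  have "(-1)^N * coeff Tp N = ((-1)^N * (-1)^N) * ((WW N / FF N) * (m11 - f 0 * m12))"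
    unfolding c by (simp only: mult_ac)
  also have "\<dots> = (WW N / FF N) * (m11 - f 0 * m12)" by (simp only: m1sq2 mult_1_left)
  also have "\<dots> > 0" using WW_pos FF_pos Mpos by simp
  finally show "(-1)^N * coeff Tp N > 0" .
  then have "coeff Tp N \<noteq> 0" by auto
  then have "N \<le> degree Tp" by (rule le_degree)
  then show "degree Tp = N" using dle by simp
qed

lemma Tp_rgt: "\<exists>Y. \<forall>x\<ge>Y. (-1)^N * poly Tp x > 2"
proof -
  have "degree (smult ((-1)^N) Tp) > 0" "lead_coeff (smult ((-1)^N) Tp) > 0"
    using Tp_lead N2 by (auto simp: lead_coeff_smult)
  then obtain n where "\<forall>x\<ge>n. poly (smult ((-1)^N) Tp) x > 2" using pinf_gt by blast
  then show ?thesis by auto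
qed

lemma Tp_lft: "\<exists>X. \<forall>x\<le>X. poly Tp x > 2"
proof -
  define r where "r = pcompose Tp [:0, -1:]"
  have dr: "degree r = N" using Tp_lead by (simp add: r_def degree_pcompose)
  have "lead_coeff r = lead_coeff Tp * (-1)^N" unfolding r_def
    by (subst lead_coeff_comp) (use Tp_lead in auto)
  then have "lead_coeff r > 0" using Tp_lead by (simp add: mult.commute)
  then obtain n where n: "\<forall>x\<ge>n. poly r x > 2" using pinf_gt[of r] dr N2 by auto
  show ?thesis
  proof (intro exI allI impI)
    fix x assume "x \<le> - n"
    then have "poly r (- x) > 2" using n by auto
    then show "poly Tp x > 2" by (simp add: r_def poly_pcompose)
  qed
qed

lemma Tp_nroots: "card {x. poly Tp x = 0} = N"
proof -
  define Tc where "Tc = map_poly (of_real :: real \<Rightarrow> complex) Tp"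
  have dTc: "degree Tc = N" unfolding Tc_def using Tp_lead by (simp add: degree_map_poly)
  have Tc_nz: "Tc \<noteq> 0" using dTc N2 by auto
  have roots: "{z. poly Tc z = 0} = of_real ` {x. poly Tp x = 0}"
  proof
    show "{z. poly Tc z = 0} \<subseteq> of_real ` {x. poly Tp x = 0}"
    proof
      fix z assume "z \<in> {z. poly Tc z = 0}"
      then have "ce Tp z = 0" by (simp add: Tc_def ce_def)
      then have "Im z = 0" by (rule real_root)
      then have zr: "z = of_real (Re z)" by (simp add: complex_eq_iff)
      have "ce Tp (of_real (Re z)) = 0" using \<open>ce Tp z = 0\<close> zr by simp
      then have "poly Tp (Re z) = 0" by (simp add: ce_real)
      then show "z \<in> of_real ` {x. poly Tp x = 0}" using zr by blast
    qed
  next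
    show "of_real ` {x. poly Tp x = 0} \<subseteq> {z. poly Tc z = 0}"
      using ce_real unfolding Tc_def ce_def by auto
  qed
  have rsq: "rsquarefree Tc"
    unfolding rsquarefree_roots
  proof (intro allI notI)
    fix a assume a: "poly Tc a = 0 \<and> poly (pderiv Tc) a = 0"
    then obtain x where x: "a = of_real x" "poly Tp x = 0" using roots by auto
    have "poly (pderiv Tc) a = of_real (poly (pderiv Tp) x)"
      unfolding Tc_def mp_pderiv x(1) using ce_real[of "pderiv Tp" x] by (simp add: ce_def)
    moreover have "poly (pderiv Tp) x \<noteq> 0" using band_D x(2) by simp
    ultimately show False using a by simp
  qed
  have fin: "finite {z. poly Tc z = 0}" using poly_roots_finite[OF Tc_nz] .
  have "Tc = smult (lead_coeff Tc) (\<Prod>z | poly Tc z = 0. [:-z, 1:])"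
    using complex_poly_decompose_rsquarefree[OF rsq] by simp
  moreover have "lead_coeff Tc \<noteq> 0" using Tc_nz by simp
  ultimately have "degree Tc = degree (\<Prod>z | poly Tc z = 0. [:-z, 1:])"
    by (metis degree_smult_eq)
  also have "\<dots> = (\<Sum>z | poly Tc z = 0. 1)" by (subst degree_prod_sum_eq) auto
  also have "\<dots> = card {z. poly Tc z = 0}" by simp
  also have "\<dots> = card {x. poly Tp x = 0}" unfolding roots by (rule card_image) (simp add: inj_on_def)
  finally show ?thesis using dTc by simp
qed

lemma band_interp: "bandT Tp N"
  by (unfold_locales) (use N2 Tp_lead Tp_nroots band_D Tp_lft Tp_rgt in auto)

end

interpretation CS: vector_space cscale
  by unfold_locales (auto simp: cscale_def fun_eq_iff algebra_simps)

lemma ker_dim1: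
  fixes x11 x12 x21 x22 :: complex
  assumes "x11 * x22 - x12 * x21 = 0" "x11 \<noteq> 0 \<or> x12 \<noteq> 0 \<or> x21 \<noteq> 0 \<or> x22 \<noteq> 0"
  shows "\<exists>a b. (a \<noteq> 0 \<or> b \<noteq> 0) \<and> (\<forall>v1 v2. (x11 * v1 + x12 * v2 = 0 \<and> x21 * v1 + x22 * v2 = 0) \<longleftrightarrow> (\<exists>t. v1 = t * a \<and> v2 = t * b))"
proof (cases "x11 \<noteq> 0 \<or> x12 \<noteq> 0")
  case True
  have "(x11 * v1 + x12 * v2 = 0 \<and> x21 * v1 + x22 * v2 = 0) \<longleftrightarrow> (\<exists>t. v1 = t * x12 \<and> v2 = t * (- x11))" for v1 v2
  proof
    assume h: "x11 * v1 + x12 * v2 = 0 \<and> x21 * v1 + x22 * v2 = 0"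
    show "\<exists>t. v1 = t * x12 \<and> v2 = t * (- x11)"
    proof (cases "x11 = 0")
      case True
      then have "x12 \<noteq> 0" using \<open>x11 \<noteq> 0 \<or> x12 \<noteq> 0\<close> by simp
      then have "v2 = 0" using h True by simp
      then show ?thesis using True \<open>x12 \<noteq> 0\<close> by (intro exI[of _ "v1 / x12"]) simp
    next
      case False
      have e: "v1 * x11 = - (v2 * x12)" using h by (simp add: eq_neg_iff_add_eq_0 mult.commute)
      show ?thesis by (rule exI[of _ "- v2 / x11"]) (use e False in \<open>auto simp: field_simps\<close>)
    qed
  next
    assume "\<exists>t. v1 = t * x12 \<and> v2 = t * (- x11)"
    then obtain t where "v1 = t * x12" "v2 = t * (- x11)" by blast
    then show "x11 * v1 + x12 * v2 = 0 \<and> x21 * v1 + x22 * v2 = 0"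
      using assms(1) by (simp add: algebra_simps)
  qed
  note eqv = this
  show ?thesis by (rule exI[of _ x12], rule exI[of _ "- x11"]) (use eqv True in auto)
next
  case False
  then have x: "x11 = 0" "x12 = 0" "x21 \<noteq> 0 \<or> x22 \<noteq> 0" using assms(2) by auto
  have "(x11 * v1 + x12 * v2 = 0 \<and> x21 * v1 + x22 * v2 = 0) \<longleftrightarrow> (\<exists>t. v1 = t * x22 \<and> v2 = t * (- x21))" for v1 v2
  proof
    assume h: "x11 * v1 + x12 * v2 = 0 \<and> x21 * v1 + x22 * v2 = 0"
    show "\<exists>t. v1 = t * x22 \<and> v2 = t * (- x21)"
    proof (cases "x21 = 0")
      case True
      then have "x22 \<noteq> 0" using x by simp
      then have "v2 = 0" using h True by simp
      then show ?thesis using True \<open>x22 \<noteq> 0\<close> by (intro exI[of _ "v1 / x22"]) simp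
    next
      case False
      have e: "v1 * x21 = - (v2 * x22)" using h by (simp add: eq_neg_iff_add_eq_0 mult.commute)
      show ?thesis by (rule exI[of _ "- v2 / x21"]) (use e False in \<open>auto simp: field_simps\<close>)
    qed
  next
    assume "\<exists>t. v1 = t * x22 \<and> v2 = t * (- x21)"
    then obtain t where "v1 = t * x22" "v2 = t * (- x21)" by blast
    then show "x11 * v1 + x12 * v2 = 0 \<and> x21 * v1 + x22 * v2 = 0"
      using x by (simp add: algebra_simps)
  qed
  note eqv = this
  show ?thesis by (rule exI[of _ x22], rule exI[of _ "- x21"]) (use eqv x(3) in auto)
qed

context sl begin

definition solv :: "real \<Rightarrow> complex \<Rightarrow> complex \<Rightarrow> nat \<Rightarrow> complex" where
  "solv lam v1 v2 n = (if n \<le> Suc N then cy (of_real lam) v1 v2 n else 0)"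

lemma solv_lin: "solv lam v1 v2 = cscale v1 (solv lam 1 0) + cscale v2 (solv lam 0 1)"
  by (auto simp: fun_eq_iff solv_def cscale_def cy_def algebra_simps)

lemma solv_0: "solv lam v1 v2 0 = v1" by (simp add: solv_def cy0)
lemma solv_1: "solv lam v1 v2 1 = v1 + of_real (1 / f 0) * v2"
  using cy_Suc[of "of_real lam" v1 v2 0] by (simp add: solv_def cy0 cu0)

lemma f0nz: "f 0 \<noteq> 0" using f_nz by auto

lemma solv_zero_iff: "solv lam v1 v2 = 0 \<longleftrightarrow> v1 = 0 \<and> v2 = 0"
proof
  assume "solv lam v1 v2 = 0"
  then have "solv lam v1 v2 0 = 0" "solv lam v1 v2 1 = 0" by auto
  then show "v1 = 0 \<and> v2 = 0" using f0nz unfolding solv_0 solv_1 by simp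
qed (simp add: solv_def cy_def fun_eq_iff)

lemma fmul: "n \<le> N \<Longrightarrow> of_real (f n) * (of_real (1 / f n) * x) = (x :: complex)"
  using f_nz by (simp add: field_simps)

lemma solv_sl: "sl_eq f q w N lam (solv lam v1 v2)"
  unfolding sl_eq_def
proof
  fix n assume n: "n \<in> {1..N}"
  define z where "z = (of_real lam :: complex)"
  obtain m where m: "n = Suc m" using n by (cases n) auto
  have d1: "of_real (f n) * (solv lam v1 v2 (n + 1) - solv lam v1 v2 n) = cu z v1 v2 n"
    using n cy_Suc[of z v1 v2 n] fmul[of n] by (simp add: solv_def z_def)
  have d0: "of_real (f (n - 1)) * (solv lam v1 v2 n - solv lam v1 v2 (n - 1)) = cu z v1 v2 m"
    using n cy_Suc[of z v1 v2 m] fmul[of m] m by (simp add: solv_def z_def)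
  have cun: "cu z v1 v2 n = cu z v1 v2 m + (of_real (q n) - z * of_real (w n)) * cy z v1 v2 n"
    using cu_Suc[of z v1 v2 m] m by simp
  have yn: "solv lam v1 v2 n = cy z v1 v2 n" using n by (simp add: solv_def z_def)
  show "- (of_real (f n) * (solv lam v1 v2 (n + 1) - solv lam v1 v2 n) -
           of_real (f (n - 1)) * (solv lam v1 v2 n - solv lam v1 v2 (n - 1))) +
          of_real (q n) * solv lam v1 v2 n = of_real (lam * w n) * solv lam v1 v2 n"
    unfolding d1 d0 unfolding yn cun by (simp add: z_def algebra_simps)
qed

lemma sl_unique:
  assumes "sl_eq f q w N lam y"
  shows "n \<le> N \<Longrightarrow> y n = cy (of_real lam) (y 0) (of_real (f 0) * (y 1 - y 0)) n \<and>
                       y (Suc n) = cy (of_real lam) (y 0) (of_real (f 0) * (y 1 - y 0)) (Suc n)"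
proof (induction n)
  case 0
  show ?case using cy_Suc[of "of_real lam" "y 0" "of_real (f 0) * (y 1 - y 0)" 0] f0nz
    by (simp add: cy0 cu0 field_simps)
next
  case (Suc n)
  define v1 where "v1 = y 0"
  define v2 where "v2 = of_real (f 0) * (y 1 - y 0)"
  define z where "z = (of_real lam :: complex)"
  have IH: "y n = cy z v1 v2 n" "y (Suc n) = cy z v1 v2 (Suc n)" using Suc by (auto simp: v1_def v2_def z_def)
  have m: "Suc n \<in> {1..N}" using Suc.prems by simp
  have eq: "- (of_real (f (Suc n)) * (y (Suc n + 1) - y (Suc n)) - of_real (f n) * (y (Suc n) - y n)) +
          of_real (q (Suc n)) * y (Suc n) = of_real (lam * w (Suc n)) * y (Suc n)"
    using assms m unfolding sl_eq_def by fastforce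
  have d0: "of_real (f n) * (y (Suc n) - y n) = cu z v1 v2 n"
    unfolding IH using cy_Suc[of z v1 v2 n] fmul[of n] Suc.prems by simp
  have "of_real (f (Suc n)) * (y (Suc (Suc n)) - y (Suc n)) = cu z v1 v2 (Suc n)"
    using eq unfolding d0 cu_Suc IH(2)[symmetric] by (simp add: z_def algebra_simps)
  then have "y (Suc (Suc n)) = y (Suc n) + of_real (1 / f (Suc n)) * cu z v1 v2 (Suc n)"
    using f_nz Suc.prems by (simp add: field_simps)
  then have "y (Suc (Suc n)) = cy z v1 v2 (Suc (Suc n))" unfolding cy_Suc[of z v1 v2 "Suc n"] IH(2) .
  then show ?case using IH(2) by (simp add: v1_def v2_def z_def)
qed

lemma sol_space_eq:
  "sol_space f q w N AB lam = {y. \<exists>v1 v2. y = solv lam v1 v2 \<and> bc_holds f N AB (solv lam v1 v2)}"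
proof (intro set_eqI iffI)
  fix y assume "y \<in> sol_space f q w N AB lam"
  then have y: "\<forall>n > N + 1. y n = 0" "sl_eq f q w N lam y" "bc_holds f N AB y" by (auto simp: sol_space_def)
  have eq: "y = solv lam (y 0) (of_real (f 0) * (y 1 - y 0))"
  proof
    fix n show "y n = solv lam (y 0) (of_real (f 0) * (y 1 - y 0)) n"
    proof (cases "n \<le> Suc N")
      case True
      then show ?thesis using sl_unique[OF y(2), of n] sl_unique[OF y(2), of "n - 1"]
        by (cases "n \<le> N") (auto simp: solv_def)
    qed (use y(1) in \<open>simp add: solv_def\<close>)
  qed
  show "y \<in> {y. \<exists>v1 v2. y = solv lam v1 v2 \<and> bc_holds f N AB (solv lam v1 v2)}"
    by (rule CollectI, rule exI[of _ "y 0"], rule exI[of _ "of_real (f 0) * (y 1 - y 0)"]) (use eq y(3) in auto)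
next
  fix y assume "y \<in> {y. \<exists>v1 v2. y = solv lam v1 v2 \<and> bc_holds f N AB (solv lam v1 v2)}"
  then obtain v1 v2 where "y = solv lam v1 v2" "bc_holds f N AB (solv lam v1 v2)" by auto
  then show "y \<in> sol_space f q w N AB lam" using solv_sl by (auto simp: sol_space_def solv_def)
qed


lemma bc_solv:
  "bc_holds f N (A, B) (solv lam v1 v2) \<longleftrightarrow>
    (A$1$1 * v1 + A$1$2 * v2 + B$1$1 * cy (of_real lam) v1 v2 N + B$1$2 * cu (of_real lam) v1 v2 N = 0 \<and>
     A$2$1 * v1 + A$2$2 * v2 + B$2$1 * cy (of_real lam) v1 v2 N + B$2$2 * cu (of_real lam) v1 v2 N = 0)"
proof -
  have s0: "solv lam v1 v2 0 = v1" by (rule solv_0)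
  have s1: "of_real (f 0) * (solv lam v1 v2 1 - solv lam v1 v2 0) = v2"
    unfolding solv_1 s0 using f0nz by (simp add: field_simps)
  have sN: "solv lam v1 v2 N = cy (of_real lam) v1 v2 N" by (simp add: solv_def)
  have sN1: "of_real (f N) * (solv lam v1 v2 (N + 1) - solv lam v1 v2 N) = cu (of_real lam) v1 v2 N"
    using cy_Suc[of "of_real lam" v1 v2 N] fmul[of N] by (simp add: solv_def)
  show ?thesis
    unfolding bc_holds_def fst_conv snd_conv s1 sN1 unfolding s0 sN
    by (simp add: vec_eq_iff forall_2 matrix_vector_mult_def sum_2 vec2_def add.assoc)
qed

definition Sker :: "real \<Rightarrow> complex \<Rightarrow> complex \<Rightarrow> complex \<Rightarrow> complex \<Rightarrow> (nat \<Rightarrow> complex) set" where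
  "Sker lam x11 x12 x21 x22 = {y. \<exists>v1 v2. y = solv lam v1 v2 \<and> x11 * v1 + x12 * v2 = 0 \<and> x21 * v1 + x22 * v2 = 0}"

lemma solv_scale: "solv lam (t * a) (t * b) = cscale t (solv lam a b)"
  by (auto simp: fun_eq_iff solv_def cscale_def cy_def algebra_simps)

lemma Sker_zero: assumes "x11 * x22 - x12 * x21 \<noteq> 0" "y \<in> Sker lam x11 x12 x21 x22" shows "y = 0"
proof -
  obtain v1 v2 where v: "y = solv lam v1 v2" "x11 * v1 + x12 * v2 = 0" "x21 * v1 + x22 * v2 = 0"
    using assms(2) by (auto simp: Sker_def)
  have "(x11 * x22 - x12 * x21) * v1 = x22 * (x11 * v1 + x12 * v2) - x12 * (x21 * v1 + x22 * v2)"
    by (simp add: algebra_simps)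
  then have "v1 = 0" using v assms(1) by simp
  have "(x11 * x22 - x12 * x21) * v2 = x11 * (x21 * v1 + x22 * v2) - x21 * (x11 * v1 + x12 * v2)"
    by (simp add: algebra_simps)
  then have "v2 = 0" using v assms(1) by simp
  show ?thesis using v \<open>v1 = 0\<close> \<open>v2 = 0\<close> solv_zero_iff by simp
qed

lemma e_indep: "CS.independent {solv lam 1 0, solv lam 0 1}" "solv lam 1 0 \<noteq> solv lam 0 1"
proof -
  define e1 where "e1 = solv lam 1 0"
  define e2 where "e2 = solv lam 0 1"
  have e1nz: "e1 \<noteq> 0" using solv_zero_iff[of lam 1 0] by (simp add: e1_def)
  have ne: "e1 \<noteq> e2"
  proof
    assume "e1 = e2"
    then have "e1 0 = e2 0" by simp
    then show False by (simp add: e1_def e2_def solv_0)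
  qed
  have i1: "CS.independent {e1}" using e1nz by (simp add: CS.independent_insert)
  have "e2 \<notin> CS.span {e1}"
  proof
    assume "e2 \<in> CS.span {e1}"
    then obtain k where k: "e2 = cscale k e1" by (auto simp: CS.span_singleton)
    then have "e2 0 = k * e1 0" by (simp add: cscale_def)
    then have "k = 0" by (simp add: e1_def e2_def solv_0)
    then have "e2 = 0" using k by (simp add: cscale_def fun_eq_iff)
    then show False using solv_zero_iff[of lam 0 1] by (simp add: e2_def)
  qed
  then have "CS.independent (insert e2 {e1})" using i1 ne by (simp add: CS.independent_insert)
  then show "CS.independent {solv lam 1 0, solv lam 0 1}" unfolding e1_def e2_def by (simp add: insert_commute)
  show "solv lam 1 0 \<noteq> solv lam 0 1" using ne by (simp add: e1_def e2_def)
qed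

lemma Sker_two: assumes "x11 = 0" "x12 = 0" "x21 = 0" "x22 = 0"
  shows "CS.dim (Sker lam x11 x12 x21 x22) = 2" "\<exists>y\<in>Sker lam x11 x12 x21 x22. y \<noteq> 0"
proof -
  define B where "B = {solv lam 1 0, solv lam 0 1}"
  have S: "Sker lam x11 x12 x21 x22 = {y. \<exists>v1 v2. y = solv lam v1 v2}" using assms by (simp add: Sker_def)
  have "B \<subseteq> Sker lam x11 x12 x21 x22" unfolding S B_def by blast
  moreover have "Sker lam x11 x12 x21 x22 \<subseteq> CS.span B"
  proof
    fix y assume "y \<in> Sker lam x11 x12 x21 x22"
    then obtain v1 v2 where yv: "y = solv lam v1 v2" unfolding S by blast
    have "y = cscale v1 (solv lam 1 0) + cscale v2 (solv lam 0 1)" unfolding yv by (rule solv_lin)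
    moreover have "solv lam 1 0 \<in> CS.span B" "solv lam 0 1 \<in> CS.span B" unfolding B_def by (auto intro: CS.span_base)
    ultimately show "y \<in> CS.span B" by (auto intro: CS.span_add CS.span_scale)
  qed
  moreover have "CS.independent B" using e_indep unfolding B_def by simp
  ultimately have "card B = CS.dim (Sker lam x11 x12 x21 x22)" by (rule CS.basis_card_eq_dim)
  moreover have "card B = 2" using e_indep unfolding B_def by simp
  ultimately show "CS.dim (Sker lam x11 x12 x21 x22) = 2" by simp
  show "\<exists>y\<in>Sker lam x11 x12 x21 x22. y \<noteq> 0"
    unfolding S by (rule bexI[of _ "solv lam 1 0"]) (use solv_zero_iff[of lam 1 0] in auto)
qed

lemma Sker_one: assumes "x11 * x22 - x12 * x21 = 0" "x11 \<noteq> 0 \<or> x12 \<noteq> 0 \<or> x21 \<noteq> 0 \<or> x22 \<noteq> 0"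
  shows "CS.dim (Sker lam x11 x12 x21 x22) = 1" "\<exists>y\<in>Sker lam x11 x12 x21 x22. y \<noteq> 0"
proof -
  obtain a b where ab: "a \<noteq> 0 \<or> b \<noteq> 0"
    "\<forall>v1 v2. (x11 * v1 + x12 * v2 = 0 \<and> x21 * v1 + x22 * v2 = 0) \<longleftrightarrow> (\<exists>t. v1 = t * a \<and> v2 = t * b)"
    using ker_dim1[OF assms] by blast
  define y0 where "y0 = solv lam a b"
  have y0nz: "y0 \<noteq> 0" using ab(1) solv_zero_iff by (simp add: y0_def)
  have S: "Sker lam x11 x12 x21 x22 = range (\<lambda>t. cscale t y0)"
  proof
    show "Sker lam x11 x12 x21 x22 \<subseteq> range (\<lambda>t. cscale t y0)"
    proof
      fix y assume "y \<in> Sker lam x11 x12 x21 x22"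
      then obtain v1 v2 where v: "y = solv lam v1 v2" "x11 * v1 + x12 * v2 = 0" "x21 * v1 + x22 * v2 = 0"
        by (auto simp: Sker_def)
      then obtain t where "v1 = t * a" "v2 = t * b" using ab(2) by blast
      then show "y \<in> range (\<lambda>t. cscale t y0)" using v(1) solv_scale by (auto simp: y0_def)
    qed
  next
    show "range (\<lambda>t. cscale t y0) \<subseteq> Sker lam x11 x12 x21 x22"
    proof
      fix y assume "y \<in> range (\<lambda>t. cscale t y0)"
      then obtain t where t: "y = cscale t y0" by blast
      have k: "x11 * (t * a) + x12 * (t * b) = 0 \<and> x21 * (t * a) + x22 * (t * b) = 0" using ab(2) by blast
      have yy: "y = solv lam (t * a) (t * b)" using t solv_scale[of lam t a b] by (simp add: y0_def)
      show "y \<in> Sker lam x11 x12 x21 x22" unfolding Sker_def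
        by (rule CollectI, rule exI[of _ "t * a"], rule exI[of _ "t * b"]) (use k yy in simp)
    qed
  qed
  have "{y0} \<subseteq> Sker lam x11 x12 x21 x22" unfolding S by (auto intro!: range_eqI[where x=1] simp: cscale_def)
  moreover have "Sker lam x11 x12 x21 x22 \<subseteq> CS.span {y0}" unfolding S CS.span_singleton by auto
  moreover have "CS.independent {y0}" using y0nz by (simp add: CS.independent_insert)
  ultimately have "card {y0} = CS.dim (Sker lam x11 x12 x21 x22)" by (rule CS.basis_card_eq_dim)
  then show "CS.dim (Sker lam x11 x12 x21 x22) = 1" by simp
  show "\<exists>y\<in>Sker lam x11 x12 x21 x22. y \<noteq> 0"
    by (rule bexI[of _ y0]) (use \<open>{y0} \<subseteq> _\<close> y0nz in auto)
qed

end

context slM begin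

lemma cy_real: "cy (of_real lam) v1 v2 N = of_real (poly (pA N) lam) * v1 + of_real (poly (pB N) lam) * v2"
  by (simp add: cy_def ce_real)
lemma cu_real: "cu (of_real lam) v1 v2 N = of_real (poly (pC N) lam) * v1 + of_real (poly (pD N) lam) * v2"
  by (simp add: cu_def ce_real)

lemma coupled_sol:
  assumes "Mv$1$1 = m11" "Mv$1$2 = m12" "Mv$2$1 = m21" "Mv$2$2 = m22"
  shows "sol_space f q w N (coupled_bc (cmat c Mv)) lam =
    Sker lam (c * of_real m11 - of_real (poly (pA N) lam)) (c * of_real m12 - of_real (poly (pB N) lam))
             (c * of_real m21 - of_real (poly (pC N) lam)) (c * of_real m22 - of_real (poly (pD N) lam))"
  unfolding sol_space_eq Sker_def coupled_bc_def bc_solv cy_real cu_real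
  by (simp add: cmat_def mat_def assms algebra_simps)

lemma U_sol:
  assumes "Kv$1$1 = k11" "Kv$1$2 = k12"
  shows "sol_space f q w N (U_bc Kv) lam =
    Sker lam (of_real k11) (of_real k12) (of_real (poly (pA N) lam)) (of_real (poly (pB N) lam))"
  unfolding sol_space_eq Sker_def U_bc_def bc_solv cy_real cu_real
  by (simp add: mat2_def assms)

lemma det_x: "poly (pA N) x * poly (pD N) x - poly (pB N) x * poly (pC N) x = 1"
  using arg_cong[OF det_one[of N], of "\<lambda>p. poly p x"] by simp

lemma coupled_det: fixes c :: complex shows
  "(c * of_real m11 - of_real (poly (pA N) lam)) * (c * of_real m22 - of_real (poly (pD N) lam))
   - (c * of_real m12 - of_real (poly (pB N) lam)) * (c * of_real m21 - of_real (poly (pC N) lam))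
   = c^2 - c * of_real (poly Tp lam) + 1"
proof -
  have d1: "of_real m11 * of_real m22 - of_real m12 * of_real m21 = (1::complex)"
    using detM by (metis of_real_1 of_real_diff of_real_mult)
  have d2: "of_real (poly (pA N) lam) * of_real (poly (pD N) lam) - of_real (poly (pB N) lam) * of_real (poly (pC N) lam) = (1::complex)"
    using det_x[of lam] by (metis of_real_1 of_real_diff of_real_mult)
  have T: "(of_real (poly Tp lam) :: complex) = of_real m22 * of_real (poly (pA N) lam) - of_real m12 * of_real (poly (pC N) lam)
      - of_real m21 * of_real (poly (pB N) lam) + of_real m11 * of_real (poly (pD N) lam)"
    by (simp add: Tp_def)
  show ?thesis using d1 d2 T by (simp only: power2_eq_square) algebra
qed

lemma Phi_eq_rM: fixes r :: real
  shows "(poly (pA N) lam = r * m11 \<and> poly (pB N) lam = r * m12 \<and> poly (pC N) lam = r * m21 \<and> poly (pD N) lam = r * m22)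
     \<longleftrightarrow> (poly Pa lam = r \<and> poly Pd lam = r \<and> poly Pb lam = 0 \<and> poly Pc lam = 0)"
proof
  assume h: "poly (pA N) lam = r * m11 \<and> poly (pB N) lam = r * m12 \<and> poly (pC N) lam = r * m21 \<and> poly (pD N) lam = r * m22"
  then show "poly Pa lam = r \<and> poly Pd lam = r \<and> poly Pb lam = 0 \<and> poly Pc lam = 0"
    using detM unfolding Pa_def Pb_def Pc_def Pd_def by (simp add: algebra_simps) (metis mult.commute distrib_left mult.left_commute mult_1_right right_diff_distrib)
next
  assume h: "poly Pa lam = r \<and> poly Pd lam = r \<and> poly Pb lam = 0 \<and> poly Pc lam = 0"
  define A where "A = poly (pA N) lam"
  define B where "B = poly (pB N) lam"
  define C where "C = poly (pC N) lam"
  define D where "D = poly (pD N) lam"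
  have ha: "m22 * A - m12 * C = r" "m11 * D - m21 * B = r" "m22 * B - m12 * D = 0" "m11 * C - m21 * A = 0"
    using h unfolding Pa_def Pb_def Pc_def Pd_def A_def B_def C_def D_def by auto
  have "A = m11 * (m22 * A - m12 * C) + m12 * (m11 * C - m21 * A)" using detM by algebra
  moreover have "B = m11 * (m22 * B - m12 * D) + m12 * (m11 * D - m21 * B)" using detM by algebra
  moreover have "C = m21 * (m22 * A - m12 * C) + m22 * (m11 * C - m21 * A)" using detM by algebra
  moreover have "D = m21 * (m22 * B - m12 * D) + m22 * (m11 * D - m21 * B)" using detM by algebra
  ultimately show "poly (pA N) lam = r * m11 \<and> poly (pB N) lam = r * m12 \<and> poly (pC N) lam = r * m21 \<and> poly (pD N) lam = r * m22"
    unfolding ha A_def[symmetric] B_def[symmetric] C_def[symmetric] D_def[symmetric] by simp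
qed

end

lemma count_list_map_upt: "count_list (map g [0..<n]) x = card {j. j < n \<and> g j = x}"
proof (induction n)
  case 0 then show ?case by simp
next
  case (Suc n)
  have "{j. j < Suc n \<and> g j = x} = {j. j < n \<and> g j = x} \<union> (if g n = x then {n} else {})"
    by (auto simp: less_Suc_eq)
  then have "card {j. j < Suc n \<and> g j = x} = card {j. j < n \<and> g j = x} + (if g n = x then 1 else 0)"
    by (auto simp: card_insert_if)
  then show ?case using Suc by simp
qed

lemma eig_by_list:
  assumes fin: "finite {\<mu>. is_eigenvalue f q w N AB \<mu>}"
    and cnt: "\<And>x. (if is_eigenvalue f q w N AB x then multiplicity f q w N AB x else 0) = card {j. j < n \<and> g j = x}"
    and srt: "\<And>j. Suc j < n \<Longrightarrow> g j \<le> g (Suc j)"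
  shows "j < n \<Longrightarrow> eig f q w N AB j = g j"
proof -
  assume jn: "j < n"
  have ms: "eig_mset f q w N AB = mset (map g [0..<n])"
  proof (rule multiset_eqI)
    fix x
    have "count (eig_mset f q w N AB) x = (\<Sum>\<mu>\<in>{\<mu>. is_eigenvalue f q w N AB \<mu>}. if x = \<mu> then multiplicity f q w N AB \<mu> else 0)"
      unfolding eig_mset_def count_sum by simp
    also have "\<dots> = (if is_eigenvalue f q w N AB x then multiplicity f q w N AB x else 0)"
      using fin by simp
    also have "\<dots> = count (mset (map g [0..<n])) x" unfolding count_mset count_list_map_upt cnt ..
    finally show "count (eig_mset f q w N AB) x = count (mset (map g [0..<n])) x" .
  qed
  have "sorted (map g [0..<n])" unfolding sorted_iff_nth_Suc using srt by simp
  then have "sorted_list_of_multiset (eig_mset f q w N AB) = map g [0..<n]"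
    unfolding ms sorted_list_of_multiset_mset by (rule sorted_sort_id)
  then show ?thesis using jn by (simp add: eig_def)
qed

context slMp begin

sublocale B: bandT Tp N by (rule band_interp)

lemma eig_coupled_gen:
  assumes c0: "\<bar>c0\<bar> \<le> 2"
    and E: "\<And>\<mu>. is_eigenvalue f q w N AB \<mu> \<longleftrightarrow> poly Tp \<mu> = c0"
    and Mu: "\<And>\<mu>. poly Tp \<mu> = c0 \<Longrightarrow> multiplicity f q w N AB \<mu> = (if poly (pderiv Tp) \<mu> = 0 then 2 else 1)"
  shows "j < N \<Longrightarrow> eig f q w N AB j = B.rho c0 j"
proof (rule eig_by_list)
  have nz: "Tp - [:c0:] \<noteq> 0"
  proof
    assume "Tp - [:c0:] = 0"
    then have "Tp = [:c0:]" by simp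
    then show False using Tp_lead N2 by simp
  qed
  have "{\<mu>. is_eigenvalue f q w N AB \<mu>} = {x. poly (Tp - [:c0:]) x = 0}" using E by auto
  then show "finite {\<mu>. is_eigenvalue f q w N AB \<mu>}" using poly_roots_finite[OF nz] by simp
next
  fix x
  show "(if is_eigenvalue f q w N AB x then multiplicity f q w N AB x else 0) = card {j. j < N \<and> B.rho c0 j = x}"
  proof (cases "poly Tp x = c0")
    case True
    then show ?thesis using E Mu B.card_rho[OF c0 True] by simp
  next
    case False
    have "{j. j < N \<and> B.rho c0 j = x} = {}" using B.rho(2)[OF _ c0] False by auto
    then show ?thesis using E False by simp
  qed
next
  fix j assume "Suc j < N" then show "B.rho c0 j \<le> B.rho c0 (Suc j)" using B.rho_le_next c0 by simp
qed

end

context slM begin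

lemma coupled_eig:
  fixes c :: complex
  assumes ent: "Mv$1$1 = m11" "Mv$1$2 = m12" "Mv$2$1 = m21" "Mv$2$2 = m22"
  shows "is_eigenvalue f q w N (coupled_bc (cmat c Mv)) \<mu> \<longleftrightarrow> c^2 - c * of_real (poly Tp \<mu>) + 1 = 0"
    and "c^2 - c * of_real (poly Tp \<mu>) + 1 = 0 \<Longrightarrow> multiplicity f q w N (coupled_bc (cmat c Mv)) \<mu> =
      (if c * of_real m11 = of_real (poly (pA N) \<mu>) \<and> c * of_real m12 = of_real (poly (pB N) \<mu>) \<and>
          c * of_real m21 = of_real (poly (pC N) \<mu>) \<and> c * of_real m22 = of_real (poly (pD N) \<mu>) then 2 else 1)"
proof -
  define x11 where "x11 = c * of_real m11 - of_real (poly (pA N) \<mu>)"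
  define x12 where "x12 = c * of_real m12 - of_real (poly (pB N) \<mu>)"
  define x21 where "x21 = c * of_real m21 - of_real (poly (pC N) \<mu>)"
  define x22 where "x22 = c * of_real m22 - of_real (poly (pD N) \<mu>)"
  have S: "sol_space f q w N (coupled_bc (cmat c Mv)) \<mu> = Sker \<mu> x11 x12 x21 x22"
    unfolding x11_def x12_def x21_def x22_def by (rule coupled_sol[OF ent])
  have dt: "x11 * x22 - x12 * x21 = c^2 - c * of_real (poly Tp \<mu>) + 1"
    unfolding x11_def x12_def x21_def x22_def by (rule coupled_det)
  have X0: "(x11 = 0 \<and> x12 = 0 \<and> x21 = 0 \<and> x22 = 0) \<longleftrightarrow> (c * of_real m11 = of_real (poly (pA N) \<mu>) \<and> c * of_real m12 = of_real (poly (pB N) \<mu>) \<and>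
          c * of_real m21 = of_real (poly (pC N) \<mu>) \<and> c * of_real m22 = of_real (poly (pD N) \<mu>))"
    unfolding x11_def x12_def x21_def x22_def by simp
  show "is_eigenvalue f q w N (coupled_bc (cmat c Mv)) \<mu> \<longleftrightarrow> c^2 - c * of_real (poly Tp \<mu>) + 1 = 0"
  proof
    assume "is_eigenvalue f q w N (coupled_bc (cmat c Mv)) \<mu>"
    then obtain y where y: "y \<in> Sker \<mu> x11 x12 x21 x22" "y \<noteq> 0" unfolding is_eigenvalue_def S by blast
    show "c^2 - c * of_real (poly Tp \<mu>) + 1 = 0"
    proof (rule ccontr)
      assume "c^2 - c * of_real (poly Tp \<mu>) + 1 \<noteq> 0"
      then have "x11 * x22 - x12 * x21 \<noteq> 0" unfolding dt .
      then show False using Sker_zero y by blast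
    qed
  next
    assume h: "c^2 - c * of_real (poly Tp \<mu>) + 1 = 0"
    then have d0: "x11 * x22 - x12 * x21 = 0" unfolding dt .
    show "is_eigenvalue f q w N (coupled_bc (cmat c Mv)) \<mu>"
      unfolding is_eigenvalue_def S
    proof (cases "x11 = 0 \<and> x12 = 0 \<and> x21 = 0 \<and> x22 = 0")
      case True then show "\<exists>y\<in>Sker \<mu> x11 x12 x21 x22. y \<noteq> 0" by (intro Sker_two(2)) auto
    next
      case False
      then have nz: "x11 \<noteq> 0 \<or> x12 \<noteq> 0 \<or> x21 \<noteq> 0 \<or> x22 \<noteq> 0" by auto
      show "\<exists>y\<in>Sker \<mu> x11 x12 x21 x22. y \<noteq> 0" by (rule Sker_one(2)[OF d0 nz])
    qed
  qed
  assume h: "c^2 - c * of_real (poly Tp \<mu>) + 1 = 0"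
  then have d0: "x11 * x22 - x12 * x21 = 0" unfolding dt .
  show "multiplicity f q w N (coupled_bc (cmat c Mv)) \<mu> = (if c * of_real m11 = of_real (poly (pA N) \<mu>) \<and> c * of_real m12 = of_real (poly (pB N) \<mu>) \<and>
          c * of_real m21 = of_real (poly (pC N) \<mu>) \<and> c * of_real m22 = of_real (poly (pD N) \<mu>) then 2 else 1)"
    unfolding multiplicity_def S X0[symmetric]
  proof (cases "x11 = 0 \<and> x12 = 0 \<and> x21 = 0 \<and> x22 = 0")
    case True
    have "CS.dim (Sker \<mu> x11 x12 x21 x22) = 2" by (intro Sker_two(1)) (use True in auto)
    then show "CS.dim (Sker \<mu> x11 x12 x21 x22) = (if x11 = 0 \<and> x12 = 0 \<and> x21 = 0 \<and> x22 = 0 then 2 else 1)"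
      using True by simp
  next
    case False
    then have nz: "x11 \<noteq> 0 \<or> x12 \<noteq> 0 \<or> x21 \<noteq> 0 \<or> x22 \<noteq> 0" by auto
    have "CS.dim (Sker \<mu> x11 x12 x21 x22) = 1" by (rule Sker_one(1)[OF d0 nz])
    then show "CS.dim (Sker \<mu> x11 x12 x21 x22) = (if x11 = 0 \<and> x12 = 0 \<and> x21 = 0 \<and> x22 = 0 then 2 else 1)"
      using False by simp
  qed
qed

end

context slMp begin

lemma eig_pm:
  fixes r :: real
  assumes ent: "Mv$1$1 = m11" "Mv$1$2 = m12" "Mv$2$1 = m21" "Mv$2$2 = m22" and r: "r = 1 \<or> r = -1"
  shows "j < N \<Longrightarrow> eig f q w N (coupled_bc (cmat (of_real r) Mv)) j = B.rho (2 * r) j"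
proof (rule eig_coupled_gen)
  have r2: "r * r = 1" using r by auto
  have cq: "(of_real r :: complex)^2 - of_real r * of_real (poly Tp \<mu>) + 1 = 0 \<longleftrightarrow> poly Tp \<mu> = 2 * r" for \<mu>
  proof -
    have "(of_real r :: complex)^2 - of_real r * of_real (poly Tp \<mu>) + 1 = of_real (r * (2 * r - poly Tp \<mu>))"
      by (cases "r = 1") (use r in \<open>auto simp: algebra_simps power2_eq_square\<close>)
    then have "((of_real r :: complex)^2 - of_real r * of_real (poly Tp \<mu>) + 1 = 0) \<longleftrightarrow> r * (2 * r - poly Tp \<mu>) = 0"
      by (metis of_real_eq_0_iff)
    then show ?thesis using r by auto
  qed
  show "\<bar>2 * r\<bar> \<le> 2" using r by auto
  show "is_eigenvalue f q w N (coupled_bc (cmat (of_real r) Mv)) \<mu> \<longleftrightarrow> poly Tp \<mu> = 2 * r" for \<mu>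
    using coupled_eig(1)[OF ent] cq by simp
  fix \<mu> assume T: "poly Tp \<mu> = 2 * r"
  have m: "multiplicity f q w N (coupled_bc (cmat (of_real r) Mv)) \<mu> =
      (if poly (pA N) \<mu> = r * m11 \<and> poly (pB N) \<mu> = r * m12 \<and> poly (pC N) \<mu> = r * m21 \<and> poly (pD N) \<mu> = r * m22 then 2 else 1)"
    using coupled_eig(2)[OF ent, of "of_real r" \<mu>] cq T
    by (simp only: of_real_mult[symmetric] of_real_eq_iff) (metis (full_types))
  have "(poly (pA N) \<mu> = r * m11 \<and> poly (pB N) \<mu> = r * m12 \<and> poly (pC N) \<mu> = r * m21 \<and> poly (pD N) \<mu> = r * m22)
        \<longleftrightarrow> poly (pderiv Tp) \<mu> = 0"
  proof -
    have "(poly Pa \<mu> = r \<and> poly Pd \<mu> = r \<and> poly Pb \<mu> = 0 \<and> poly Pc \<mu> = 0) \<longleftrightarrow> poly (pderiv Tp) \<mu> = 0"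
    proof
      assume "poly Pa \<mu> = r \<and> poly Pd \<mu> = r \<and> poly Pb \<mu> = 0 \<and> poly Pc \<mu> = 0"
      then show "poly (pderiv Tp) \<mu> = 0" using edge_conv by auto
    next
      assume d: "poly (pderiv Tp) \<mu> = 0"
      have "(poly Tp \<mu>)^2 = 4" using T r by auto
      note e = edge[OF this d]
      then show "poly Pa \<mu> = r \<and> poly Pd \<mu> = r \<and> poly Pb \<mu> = 0 \<and> poly Pc \<mu> = 0"
        using T unfolding Tp_x by auto
    qed
    then show ?thesis using Phi_eq_rM by simp
  qed
  then show "multiplicity f q w N (coupled_bc (cmat (of_real r) Mv)) \<mu> = (if poly (pderiv Tp) \<mu> = 0 then 2 else 1)"
    using m by simp
qed

lemma eig_gamma:
  assumes ent: "Mv$1$1 = m11" "Mv$1$2 = m12" "Mv$2$1 = m21" "Mv$2$2 = m22" and g: "sin \<gamma> \<noteq> 0"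
  shows "j < N \<Longrightarrow> eig f q w N (coupled_bc (cmat (cis \<gamma>) Mv)) j = B.rho (2 * cos \<gamma>) j"
proof (rule eig_coupled_gen)
  have cs: "(cos \<gamma>)^2 < 1" using g sin_cos_squared_add[of \<gamma>] by (smt (verit) zero_less_power2)
  then have ac: "\<bar>cos \<gamma>\<bar> < 1" using abs_square_less_1 by blast
  then show c0: "\<bar>2 * cos \<gamma>\<bar> \<le> 2" by (simp add: abs_mult)
  have cq: "(cis \<gamma>)^2 - cis \<gamma> * of_real (poly Tp \<mu>) + 1 = 0 \<longleftrightarrow> poly Tp \<mu> = 2 * cos \<gamma>" for \<mu>
  proof -
    have "(cis \<gamma>)^2 - cis \<gamma> * of_real (poly Tp \<mu>) + 1 = cis \<gamma> * (cis \<gamma> + cis (-\<gamma>) - of_real (poly Tp \<mu>))"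
      using cis_mult[of \<gamma> "-\<gamma>"] by (simp add: algebra_simps power2_eq_square)
    also have "cis \<gamma> + cis (-\<gamma>) = of_real (2 * cos \<gamma>)" by (simp add: complex_eq_iff)
    finally have e: "(cis \<gamma>)^2 - cis \<gamma> * of_real (poly Tp \<mu>) + 1 = cis \<gamma> * of_real (2 * cos \<gamma> - poly Tp \<mu>)" by simp
    have "cis \<gamma> * of_real (2 * cos \<gamma> - poly Tp \<mu>) = 0 \<longleftrightarrow> 2 * cos \<gamma> - poly Tp \<mu> = 0"
      by (metis cis_neq_zero mult_eq_0_iff of_real_eq_0_iff)
    then show ?thesis unfolding e by linarith
  qed
  show "is_eigenvalue f q w N (coupled_bc (cmat (cis \<gamma>) Mv)) \<mu> \<longleftrightarrow> poly Tp \<mu> = 2 * cos \<gamma>" for \<mu>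
    using coupled_eig(1)[OF ent] cq by simp
  fix \<mu> assume T: "poly Tp \<mu> = 2 * cos \<gamma>"
  have nX: "\<not> (cis \<gamma> * of_real m11 = of_real (poly (pA N) \<mu>) \<and> cis \<gamma> * of_real m12 = of_real (poly (pB N) \<mu>) \<and>
          cis \<gamma> * of_real m21 = of_real (poly (pC N) \<mu>) \<and> cis \<gamma> * of_real m22 = of_real (poly (pD N) \<mu>))"
  proof
    assume h: "cis \<gamma> * of_real m11 = of_real (poly (pA N) \<mu>) \<and> cis \<gamma> * of_real m12 = of_real (poly (pB N) \<mu>) \<and>
          cis \<gamma> * of_real m21 = of_real (poly (pC N) \<mu>) \<and> cis \<gamma> * of_real m22 = of_real (poly (pD N) \<mu>)"
    have "(of_real (poly Pa \<mu>) :: complex) = of_real m22 * of_real (poly (pA N) \<mu>) - of_real m12 * of_real (poly (pC N) \<mu>)"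
      by (simp add: Pa_def)
    also have "\<dots> = of_real m22 * (cis \<gamma> * of_real m11) - of_real m12 * (cis \<gamma> * of_real m21)"
      using h by simp
    also have "\<dots> = cis \<gamma> * (of_real (m11 * m22 - m12 * m21))" by (simp add: algebra_simps)
    also have "\<dots> = cis \<gamma>" using detM by simp
    finally have "Im (cis \<gamma>) = 0" by (metis Im_complex_of_real)
    then show False using g by simp
  qed
  have "poly (pderiv Tp) \<mu> \<noteq> 0" using band_D[of \<mu>] T ac by (simp add: abs_mult)
  then show "multiplicity f q w N (coupled_bc (cmat (cis \<gamma>) Mv)) \<mu> = (if poly (pderiv Tp) \<mu> = 0 then 2 else 1)"
  proof -
    have ceq: "(cis \<gamma>)^2 - cis \<gamma> * of_real (poly Tp \<mu>) + 1 = 0" using cq[of \<mu>] T by blast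
    show ?thesis using coupled_eig(2)[OF ent ceq] nX \<open>poly (pderiv Tp) \<mu> \<noteq> 0\<close> by simp
  qed
qed

end

context bandT begin

lemma lo_lt_hi: assumes "j < N" shows "lo j < hi j"
proof -
  note L = lohi[OF assms]
  show ?thesis
  proof (rule ccontr)
    assume "\<not> lo j < hi j"
    then have "hi j < lo j \<or> hi j = lo j" by auto
    then show False
    proof
      assume "hi j < lo j" then show False using Smono[OF assms L(3) L(1)] L(2,4) by linarith
    qed (use L in auto)
  qed
qed

lemma lohi_minmax: assumes "j < N"
  shows "max (rho 2 j) (rho (-2) j) = hi j" "min (rho 2 j) (rho (-2) j) = lo j"
  using lo_lt_hi[OF assms] lo_hi_rho[of j] by (auto simp: max_def min_def)

end

locale slU = slMp +
  fixes k11 k12 k21 k22 s :: real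
  assumes detK: "k11 * k22 - k12 * k21 = 1"
    and sgn: "s = 1 \<or> s = -1"
    and mk: "m11 = s * k11" "m12 = s * k12" "m21 = s * k21" "m22 = s * k22"
    and Kc: "k11 - f 0 * k12 \<noteq> 0"
begin

definition Hp :: "real poly" where "Hp = [:k12:] * pA N - [:k11:] * pB N"

lemma Hp_deg: "Hp \<noteq> 0" "degree Hp = N - 1"
proof -
  have fk: "\<forall>k\<le>N - 1. f k \<noteq> 0" using f_nz by auto
  have NS: "Suc (N - 1) = N" using N2 by simp
  note dc = deg_coeff[OF fk, unfolded NS]
  have dle: "degree Hp \<le> N - 1" unfolding Hp_def using dc
    by (auto intro!: degree_diff_le order.trans[OF degree_smult_le])
  have "coeff Hp (N - 1) = k12 * coeff (pA N) (N - 1) - k11 * coeff (pB N) (N - 1)"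
    unfolding Hp_def by simp
  also have "\<dots> = (-1)^(N-1) * (WW (N - 1) / FF N) * (k12 * f 0 - k11)"
    using dc FF_pos by (simp add: field_simps)
  finally have c: "coeff Hp (N - 1) = (-1)^(N-1) * (WW (N - 1) / FF N) * (k12 * f 0 - k11)" .
  have "WW (N - 1) > 0" unfolding WW_def using w_pos by (intro linordered_semidom_class.prod_pos) auto
  moreover have "FF N > 0" by (rule FF_pos)
  moreover have "k12 * f 0 - k11 \<noteq> 0" using Kc by (simp add: algebra_simps)
  ultimately have "coeff Hp (N - 1) \<noteq> 0" unfolding c by simp
  then show "Hp \<noteq> 0" by auto
  have "N - 1 \<le> degree Hp" using \<open>coeff Hp (N - 1) \<noteq> 0\<close> by (rule le_degree)
  then show "degree Hp = N - 1" using dle by simp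
qed

lemma g_eq: "Qf x (- k11) (- k12) = s * poly Hp x"
proof -
  have s2: "s * s = 1" using sgn by auto
  have d: "poly (pA N) x * poly (pD N) x - poly (pB N) x * poly (pC N) x = 1" by (rule det_x)
  show ?thesis
    unfolding Qf_def Pa_def Pb_def Pc_def Pd_def Hp_def unfolding mk
    using s2 d detK by (simp add: power2_eq_square) algebra
qed

lemma H_sign: "\<bar>poly Tp x\<bar> < 2 \<Longrightarrow> poly (smult s Hp) x * poly (pderiv Tp) x > 0"
proof -
  assume a: "\<bar>poly Tp x\<bar> < 2"
  have "(poly Tp x - 2) * (poly Tp x + 2) < 0" by (rule mult_neg_pos) (use a in auto)
  then have disc: "(poly Tp x)^2 - 4 < 0" by (simp add: algebra_simps power2_eq_square)
  have cD: "poly Pc x * poly (pderiv Tp) x > 0" using band_pos[OF a] .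
  have pcnz: "poly Pc x \<noteq> 0" using cD by auto
  have kk: "k11 \<noteq> 0 \<or> k12 \<noteq> 0" using detK by auto
  have "4 * poly Pc x * Qf x (- k11) (- k12) > 0"
  proof -
    have e: "4 * poly Pc x * Qf x (- k11) (- k12) = (2 * poly Pc x * (- k12) + (poly Pa x - poly Pd x) * (- k11))^2 - ((poly Tp x)^2 - 4) * (- k11)^2"
      by (rule Q4)
    show ?thesis
    proof (cases "k11 = 0")
      case True
      then have "k12 \<noteq> 0" using kk by simp
      then show ?thesis unfolding e using True pcnz by simp
    next
      case False
      have "((poly Tp x)^2 - 4) * (- k11)^2 < 0" by (rule mult_neg_pos) (use disc False in auto)
      then show ?thesis unfolding e using zero_le_power2[of "2 * poly Pc x * (- k12) + (poly Pa x - poly Pd x) * (- k11)"] by linarith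
    qed
  qed
  then have cg0: "4 * poly Pc x * (s * poly Hp x) > 0" unfolding g_eq .
  then have cg: "poly Pc x * (s * poly Hp x) > 0" by (simp add: mult.left_commute)
  have "(poly Pc x * (s * poly Hp x)) * (poly Pc x * poly (pderiv Tp) x) > 0" using cg cD by simp
  moreover have "(poly Pc x * (s * poly Hp x)) * (poly Pc x * poly (pderiv Tp) x) = (poly Pc x * poly Pc x) * ((s * poly Hp x) * poly (pderiv Tp) x)"
    by (simp only: mult_ac)
  moreover have "poly Pc x * poly Pc x > 0" using pcnz by (auto simp: zero_less_mult_iff linorder_neq_iff)
  ultimately show ?thesis by (simp add: zero_less_mult_iff)
qed

definition rU :: "nat \<Rightarrow> real" where
  "rU j = (SOME r. poly Hp r = 0 \<and> B.hi j \<le> r \<and> r \<le> B.lo (Suc j))"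

lemma rU: assumes "Suc j < N" shows "poly Hp (rU j) = 0" "B.hi j \<le> rU j" "rU j \<le> B.lo (Suc j)"
proof -
  have "\<exists>r. poly (smult s Hp) r = 0 \<and> B.hi j \<le> r \<and> r \<le> B.lo (Suc j)"
    using B.gap_root[of "smult s Hp" j] H_sign assms by blast
  then have ex: "\<exists>r. poly Hp r = 0 \<and> B.hi j \<le> r \<and> r \<le> B.lo (Suc j)" using sgn by auto
  show "poly Hp (rU j) = 0" "B.hi j \<le> rU j" "rU j \<le> B.lo (Suc j)"
    using someI_ex[OF ex] unfolding rU_def by auto
qed

lemma rU_less: assumes "i < j" "Suc j < N" shows "rU i < rU j"
proof -
  have "rU i \<le> B.lo (Suc i)" using rU(3)[of i] assms by simp
  also have "B.lo (Suc i) < B.hi (Suc i)" using B.lo_lt_hi[of "Suc i"] assms by simp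
  also have "B.hi (Suc i) \<le> B.hi j"
  proof (cases "Suc i = j")
    case False
    then have "Suc i < j" using assms by simp
    have "B.hi (Suc i) \<le> rU (Suc i)" using rU(2)[of "Suc i"] assms by simp
    also have "rU (Suc i) \<le> B.lo (Suc (Suc i))" using rU(3)[of "Suc i"] assms \<open>Suc i < j\<close> by simp
    also have "B.lo (Suc (Suc i)) \<le> B.hi j"
    proof -
      have "B.inP (Suc (Suc i)) (B.lo (Suc (Suc i)))" "B.inP j (B.hi j)"
        using B.lohi[of "Suc (Suc i)"] B.lohi[of j] assms \<open>Suc i < j\<close> by auto
      moreover have "B.lo (Suc (Suc i)) \<le> B.hi (Suc (Suc i))" using B.lo_lt_hi[of "Suc (Suc i)"] assms \<open>Suc i < j\<close> by simp
      ultimately show ?thesis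
        using B.inP_order[of "Suc (Suc i)" j] assms \<open>Suc i < j\<close>
        by (cases "Suc (Suc i) = j") auto
    qed
    finally show ?thesis .
  qed simp
  also have "B.hi j \<le> rU j" using rU(2) assms by simp
  finally show ?thesis .
qed

lemma U_eig: "j < N - 1 \<Longrightarrow> eig f q w N (U_bc Kv) j = rU j"
  if ent: "Kv$1$1 = k11" "Kv$1$2 = k12"
proof (rule eig_by_list)
  have kk: "k11 \<noteq> 0 \<or> k12 \<noteq> 0" using detK by auto
  have E: "is_eigenvalue f q w N (U_bc Kv) \<mu> \<longleftrightarrow> poly Hp \<mu> = 0" for \<mu>
  proof -
    have S: "sol_space f q w N (U_bc Kv) \<mu> = Sker \<mu> (of_real k11) (of_real k12) (of_real (poly (pA N) \<mu>)) (of_real (poly (pB N) \<mu>))"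
      by (rule U_sol[OF ent])
    have dt: "of_real k11 * of_real (poly (pB N) \<mu>) - of_real k12 * of_real (poly (pA N) \<mu>) = (- of_real (poly Hp \<mu>) :: complex)"
      by (simp add: Hp_def algebra_simps)
    have nz: "(of_real k11 :: complex) \<noteq> 0 \<or> (of_real k12 :: complex) \<noteq> 0 \<or> (of_real (poly (pA N) \<mu>) :: complex) \<noteq> 0 \<or> (of_real (poly (pB N) \<mu>) :: complex) \<noteq> 0"
      using kk by auto
    show ?thesis
    proof
      assume "is_eigenvalue f q w N (U_bc Kv) \<mu>"
      then obtain y where y: "y \<in> Sker \<mu> (of_real k11) (of_real k12) (of_real (poly (pA N) \<mu>)) (of_real (poly (pB N) \<mu>))" "y \<noteq> 0"
        unfolding is_eigenvalue_def S by blast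
      show "poly Hp \<mu> = 0"
      proof (rule ccontr)
        assume "poly Hp \<mu> \<noteq> 0"
        then have "of_real k11 * of_real (poly (pB N) \<mu>) - of_real k12 * of_real (poly (pA N) \<mu>) \<noteq> (0::complex)" unfolding dt by simp
        then show False using Sker_zero y by blast
      qed
    next
      assume "poly Hp \<mu> = 0"
      then have d0: "of_real k11 * of_real (poly (pB N) \<mu>) - of_real k12 * of_real (poly (pA N) \<mu>) = (0::complex)" unfolding dt by simp
      show "is_eigenvalue f q w N (U_bc Kv) \<mu>" unfolding is_eigenvalue_def S by (rule Sker_one(2)[OF d0 nz])
    qed
  qed
  have Mu: "poly Hp \<mu> = 0 \<Longrightarrow> multiplicity f q w N (U_bc Kv) \<mu> = 1" for \<mu>
  proof -
    assume h: "poly Hp \<mu> = 0"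
    have S: "sol_space f q w N (U_bc Kv) \<mu> = Sker \<mu> (of_real k11) (of_real k12) (of_real (poly (pA N) \<mu>)) (of_real (poly (pB N) \<mu>))"
      by (rule U_sol[OF ent])
    have d0: "of_real k11 * of_real (poly (pB N) \<mu>) - of_real k12 * of_real (poly (pA N) \<mu>) = (0::complex)"
      using h by (simp add: Hp_def algebra_simps of_real_mult[symmetric] of_real_diff[symmetric] del: of_real_mult of_real_diff)
    have nz: "(of_real k11 :: complex) \<noteq> 0 \<or> (of_real k12 :: complex) \<noteq> 0 \<or> (of_real (poly (pA N) \<mu>) :: complex) \<noteq> 0 \<or> (of_real (poly (pB N) \<mu>) :: complex) \<noteq> 0"
      using kk by auto
    show ?thesis unfolding multiplicity_def S by (rule Sker_one(1)[OF d0 nz])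
  qed
  have roots: "{x. poly Hp x = 0} = rU ` {..<N-1}"
  proof
    show "rU ` {..<N-1} \<subseteq> {x. poly Hp x = 0}" using rU(1) by auto
  next
    show "{x. poly Hp x = 0} \<subseteq> rU ` {..<N-1}"
    proof
      fix x assume x: "x \<in> {x. poly Hp x = 0}"
      show "x \<in> rU ` {..<N-1}"
      proof (rule ccontr)
        assume nx: "x \<notin> rU ` {..<N-1}"
        have inj: "inj_on rU {..<N-1}"
        proof (rule inj_onI)
          fix a b assume "a \<in> {..<N-1}" "b \<in> {..<N-1}" "rU a = rU b"
          then show "a = b" using rU_less[of a b] rU_less[of b a] by (metis lessThan_iff less_diff_conv nat_neq_iff not_less_eq Suc_eq_plus1 less_irrefl)
        qed
        have fin: "finite {x. poly Hp x = 0}" using poly_roots_finite[OF Hp_deg(1)] .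
        have "insert x (rU ` {..<N-1}) \<subseteq> {x. poly Hp x = 0}" using x rU(1) by auto
        then have "card (insert x (rU ` {..<N-1})) \<le> card {x. poly Hp x = 0}" using card_mono[OF fin] by blast
        also have "\<dots> \<le> N - 1" using card_poly_roots_bound[OF Hp_deg(1)] Hp_deg(2) by simp
        finally show False using nx card_image[OF inj] by simp
      qed
    qed
  qed
  show "finite {\<mu>. is_eigenvalue f q w N (U_bc Kv) \<mu>}" using E poly_roots_finite[OF Hp_deg(1)] by simp
  fix x
  show "(if is_eigenvalue f q w N (U_bc Kv) x then multiplicity f q w N (U_bc Kv) x else 0) = card {j. j < N - 1 \<and> rU j = x}"
  proof (cases "poly Hp x = 0")
    case True
    then obtain i where i: "i < N - 1" "x = rU i" using roots by auto
    have "{j. j < N - 1 \<and> rU j = x} = {i}"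
    proof
      show "{j. j < N - 1 \<and> rU j = x} \<subseteq> {i}"
      proof
        fix j assume "j \<in> {j. j < N - 1 \<and> rU j = x}"
        then have j: "j < N - 1" "rU j = rU i" using i by auto
        have a: "Suc j < N" "Suc i < N" using j(1) i(1) by arith+
        show "j \<in> {i}"
        proof (rule ccontr)
          assume "j \<notin> {i}"
          then have "i < j \<or> j < i" by auto
          then show False
          proof
            assume "i < j" then have "rU i < rU j" using rU_less a by blast
            then show False using j(2) by simp
          next
            assume "j < i" then have "rU j < rU i" using rU_less a by blast
            then show False using j(2) by simp
          qed
        qed
      qed
    qed (use i in auto)
    then show ?thesis using E Mu True by simp
  next
    case False
    have "{j. j < N - 1 \<and> rU j = x} = {}" using rU(1) False by auto
    then show ?thesis using E False by simp
  qed
next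
  fix j assume "Suc j < N - 1"
  then have "Suc (Suc j) < N" by arith
  then show "rU j \<le> rU (Suc j)" using rU_less[of j "Suc j"] by simp
qed

end

lemma sin_nz: assumes "\<gamma> \<in> {-pi<..<0} \<union> {0<..<pi}" shows "sin \<gamma> \<noteq> 0"
proof -
  have "sin \<gamma> > 0 \<or> sin \<gamma> < 0"
  proof (cases "\<gamma> > 0")
    case True then show ?thesis using assms sin_gt_zero by auto
  next
    case False
    then have "0 < - \<gamma>" "- \<gamma> < pi" using assms by auto
    then have "sin (- \<gamma>) > 0" by (rule sin_gt_zero)
    then show ?thesis by simp
  qed
  then show ?thesis by auto
qed

theorem theorem3p9:
  fixes f q w :: "nat \<Rightarrow> real" and N :: nat and \<gamma> :: real and K :: "real ^ 2 ^ 2"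
  assumes N2: "N \<ge> 2"
    and f_nz: "\<forall>n\<le>N. f n \<noteq> 0"
    and w_pos: "\<forall>n\<in>{1..N}. w n > 0"
    and prod_pos: "(\<Prod>i<N. 1 / f i) > 0"
    and gamma: "\<gamma> \<in> {-pi<..<0} \<union> {0<..<pi}"
    and K_SL: "det K = 1"
    and K_cond: "K$1$1 - f 0 * K$1$2 \<noteq> 0"
  shows "\<forall>M \<in> {K, -K}. M$1$1 - f 0 * M$1$2 > 0 \<longrightarrow>
     (let lM = eig f q w N (coupled_bc (cmat 1 M));
          lmM = eig f q w N (coupled_bc (cmat 1 (-M)));
          lg = eig f q w N (coupled_bc (cmat (cis \<gamma>) M));
          lU = eig f q w N (U_bc K)
      in (\<forall>j<N. (even j \<longrightarrow> lM j < lg j \<and> lg j < lmM j) \<and>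
                 (odd j \<longrightarrow> lmM j < lg j \<and> lg j < lM j)) \<and>
         (\<forall>j. j + 2 \<le> N \<longrightarrow>
              max (lM j) (lmM j) \<le> lU j \<and> lU j \<le> min (lM (j+1)) (lmM (j+1))))"
proof (intro ballI impI)
  fix M assume MK: "M \<in> {K, -K}" and Mpos: "M$1$1 - f 0 * M$1$2 > 0"
  obtain s :: real where s: "s = 1 \<or> s = -1" "\<And>i j. M$i$j = s * K$i$j"
  proof (cases "M = K")
    case True then show ?thesis using that[of 1] by simp
  next
    case False then have "M = -K" using MK by auto
    then show ?thesis using that[of "-1"] by simp
  qed
  have dK: "K$1$1 * K$2$2 - K$1$2 * K$2$1 = 1" using K_SL by (simp add: det_2)
  interpret U: slU f q w N "M$1$1" "M$1$2" "M$2$1" "M$2$2" "K$1$1" "K$1$2" "K$2$1" "K$2$2" s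
  proof unfold_locales
    show "M$1$1 * M$2$2 - M$1$2 * M$2$1 = 1"
    proof -
      have "M$1$1 * M$2$2 - M$1$2 * M$2$1 = (s * s) * (K$1$1 * K$2$2 - K$1$2 * K$2$1)"
        unfolding s(2) by (simp add: algebra_simps)
      then show ?thesis using s(1) dK by auto
    qed
  qed (use N2 f_nz w_pos prod_pos Mpos dK s K_cond in auto)
  have sg: "sin \<gamma> \<noteq> 0" by (rule sin_nz[OF gamma])
  have cs: "(cos \<gamma>)^2 < 1" using sg sin_cos_squared_add[of \<gamma>] by (smt (verit) zero_less_power2)
  then have ac: "\<bar>cos \<gamma>\<bar> < 1" using abs_square_less_1 by blast
  have c1: "cmat 1 M = cmat (of_real 1) M" by simp
  have c2: "cmat 1 (-M) = cmat (of_real (-1)) M" by (simp add: cmat_def vec_eq_iff)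
  have lM: "eig f q w N (coupled_bc (cmat 1 M)) j = U.B.rho 2 j" if "j < N" for j
    using U.eig_pm[of M 1 j] that unfolding c1 by simp
  have lmM: "eig f q w N (coupled_bc (cmat 1 (-M))) j = U.B.rho (-2) j" if "j < N" for j
    using U.eig_pm[of M "-1" j] that unfolding c2 by simp
  have lg: "eig f q w N (coupled_bc (cmat (cis \<gamma>) M)) j = U.B.rho (2 * cos \<gamma>) j" if "j < N" for j
    using U.eig_gamma[of M \<gamma> j] that sg by simp
  have lU: "eig f q w N (U_bc K) j = U.rU j" if "j < N - 1" for j
    using U.U_eig[of K j] that by simp
  have g1: "-2 < 2 * cos \<gamma>" "2 * cos \<gamma> < 2" using ac by auto
  show "let lM = eig f q w N (coupled_bc (cmat 1 M));
          lmM = eig f q w N (coupled_bc (cmat 1 (-M)));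
          lg = eig f q w N (coupled_bc (cmat (cis \<gamma>) M));
          lU = eig f q w N (U_bc K)
      in (\<forall>j<N. (even j \<longrightarrow> lM j < lg j \<and> lg j < lmM j) \<and>
                 (odd j \<longrightarrow> lmM j < lg j \<and> lg j < lM j)) \<and>
         (\<forall>j. j + 2 \<le> N \<longrightarrow>
              max (lM j) (lmM j) \<le> lU j \<and> lU j \<le> min (lM (j+1)) (lmM (j+1)))"
    unfolding Let_def
  proof (intro conjI allI impI)
    fix j assume j: "j < N"
    note m1 = U.B.rho_mono_c[OF j, of "-2" "2 * cos \<gamma>"] and m2 = U.B.rho_mono_c[OF j, of "2 * cos \<gamma>" 2]
    {
      assume "even j"
      then show "eig f q w N (coupled_bc (cmat 1 M)) j < eig f q w N (coupled_bc (cmat (cis \<gamma>) M)) j"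
        "eig f q w N (coupled_bc (cmat (cis \<gamma>) M)) j < eig f q w N (coupled_bc (cmat 1 (-M))) j"
        using m1 m2 g1 lM[OF j] lmM[OF j] lg[OF j] by auto
    }
    {
      assume "odd j"
      then show "eig f q w N (coupled_bc (cmat 1 (-M))) j < eig f q w N (coupled_bc (cmat (cis \<gamma>) M)) j"
        "eig f q w N (coupled_bc (cmat (cis \<gamma>) M)) j < eig f q w N (coupled_bc (cmat 1 M)) j"
        using m1 m2 g1 lM[OF j] lmM[OF j] lg[OF j] by auto
    }
  next
    fix j assume j: "j + 2 \<le> N"
    then have j1: "Suc j < N" "j < N" "j < N - 1" by auto
    have "max (eig f q w N (coupled_bc (cmat 1 M)) j) (eig f q w N (coupled_bc (cmat 1 (-M))) j) = U.B.hi j"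
      using lM[OF j1(2)] lmM[OF j1(2)] U.B.lohi_minmax[OF j1(2)] by simp
    also have "\<dots> \<le> U.rU j" using U.rU(2)[OF j1(1)] .
    also have "\<dots> = eig f q w N (U_bc K) j" using lU[OF j1(3)] by simp
    finally show "max (eig f q w N (coupled_bc (cmat 1 M)) j) (eig f q w N (coupled_bc (cmat 1 (-M))) j) \<le> eig f q w N (U_bc K) j" .
    have "eig f q w N (U_bc K) j = U.rU j" using lU[OF j1(3)] by simp
    also have "\<dots> \<le> U.B.lo (Suc j)" using U.rU(3)[OF j1(1)] .
    also have "\<dots> = min (eig f q w N (coupled_bc (cmat 1 M)) (j + 1)) (eig f q w N (coupled_bc (cmat 1 (-M))) (j + 1))"
      using lM[OF j1(1)] lmM[OF j1(1)] U.B.lohi_minmax[OF j1(1)] by simp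
    finally show "eig f q w N (U_bc K) j \<le> min (eig f q w N (coupled_bc (cmat 1 M)) (j + 1)) (eig f q w N (coupled_bc (cmat 1 (-M))) (j + 1))" .
  qed
qed


end
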